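(* Fix $\beta>2$ and let $F_\beta(\mathbf{x},r)$, $r_1^\beta$, $r_2^\beta$, $\mathbf{m}_0^\beta(r)$, $\boldsymbol{\sigma}_0^\beta(r)$, $\mathbf{p}^\beta(r)$ be as in the context. Then: (1) $\mathbf{m}_0^\beta(r)$ is a local minimum of $F_\beta(\cdot,r)$ for all $r\in(0,r_2^\beta)$; (2) $\boldsymbol{\sigma}_0^\beta(r)$ is a saddle point of $F_\beta(\cdot,r)$ for all $r>0$; (3) $\mathbf{p}^\beta(r)$ is a local maximum of $F_\beta(\cdot,r)$ for all $r\in(0,r_1^\beta)$, and a saddle point of $F_\beta(\cdot,r)$ for all $r\in(r_1^\beta,r_2^\beta)$.
   Context: $\Xi=\{(x_1,x_2): x_1,x_2\ge0,\ x_1+x_2\le1\}$, $x_0=1-x_1-x_2$, $\mathbf{v}_k=(\cos(2\pi k/3),\sin(2\pi k/3))$, and for $r\ge0$ $$F_\beta(\mathbf{x},r)=-\frac12\Big|\sum_{k=0}^2x_k\mathbf{v}_k\Big|^2+\frac1\beta\sum_{k=0}^2x_k\log(3x_k)+r\,x_0-\frac r2(x_1+x_2)$$ (Potts potential with external field of magnitude $r$ and angle $\pi$). Let $h(t)=-3t(1-2t)\log\frac{1-2t}{t}-3t+1$ on $(0,1/2)$, $f_r(t)=\frac{2}{3(1-r-3t)}\log\frac{1-2t}{t}$, $k_r=(1-r)/3$; for $0<r<1$, $m_0(r)$ is the unique solution in $(0,k_r)$ of $h(t)=r$ (equivalently of $f_r'(t)=0$), and $r\mapsto f_r(m_0(r))$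 is increasing on $(0,1)$ with limit $\infty$ as $r\uparrow 1$. Let $r_2^\beta$ be the unique $r\in(0,1)$ with $f_r(m_0(r))=\beta$, and $r_1^\beta=1-\frac2\beta-\frac{2}{3\beta}\log\big(\frac{3\beta}2-2\big)$ (one has $r_1^\beta<r_2^\beta$). For $r\in(0,r_2^\beta)$, the equation $f_r(t)=\beta$ has exactly three solutions $p_\beta(r)<u_\beta(r)<q_\beta(r)$ in $(0,1/2)$, with $p_\beta(r)\in(0,m_0(r))$, $u_\beta(r)\in(m_0(r),k_r)$, $q_\beta(r)\in(1/3,1/2)$; for every $r>0$ the equation $f_r(t)=\beta$ has exactly one solution $q_\beta(r)$ in $(1/3,1/2)$. Define $\mathbf{m}_0^\beta(r)=(p_\beta(r),p_\beta(r))$, $\mathbf{p}^\beta(r)=(u_\beta(r),u_\beta(r))$ for $r\in(0,r_2^\beta)$, and $\boldsymbol{\sigma}_0^\beta(r)=(q_\beta(r),q_\beta(r))$ for $r>0$; these are critical points of $F_\beta(\cdot,r)$. A saddle point is a critical point where the Hessian (in $(x_1,x_2)$) has one positive and one negative eigenvalue. *)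

theory Defs
  imports "HOL-Analysis.Analysis"
begin

definition pt :: "real \<Rightarrow> real \<Rightarrow> real^2" where
  "pt a b = vector [a, b]"

definition Xi :: "(real^2) set" where
  "Xi = {x. x$1 \<ge> 0 \<and> x$2 \<ge> 0 \<and> x$1 + x$2 \<le> 1}"

text \<open>Potts potential with external field of magnitude r and angle pi.
  x0 = 1 - x1 - x2, v_k = (cos(2 pi k/3), sin(2 pi k/3)).\<close>
definition Fb :: "real \<Rightarrow> real^2 \<Rightarrow> real \<Rightarrow> real" where
  "Fb \<beta> x r = (let x1 = x$1; x2 = x$2; x0 = 1 - x1 - x2;
      xs = (\<lambda>k::nat. if k = 0 then x0 else if k = 1 then x1 else x2);
      a = (\<Sum>k<3. xs k * cos (2 * pi * real k / 3));
      b = (\<Sum>k<3. xs k * sin (2 * pi * real k / 3))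
    in - (1/2) * (a\<^sup>2 + b\<^sup>2) + (1/\<beta>) * (\<Sum>k<3. xs k * ln (3 * xs k))
       + r * x0 - (r/2) * (x1 + x2))"

definition h_fun :: "real \<Rightarrow> real" where
  "h_fun t = - 3 * t * (1 - 2*t) * ln ((1 - 2*t) / t) - 3 * t + 1"

definition f_fun :: "real \<Rightarrow> real \<Rightarrow> real" where
  "f_fun r t = 2 / (3 * (1 - r - 3*t)) * ln ((1 - 2*t) / t)"

definition k_fun :: "real \<Rightarrow> real" where
  "k_fun r = (1 - r) / 3"

definition m0 :: "real \<Rightarrow> real" where
  "m0 r = (THE t. 0 < t \<and> t < k_fun r \<and> h_fun t = r)"

definition r2 :: "real \<Rightarrow> real" where
  "r2 \<beta> = (THE r. 0 < r \<and> r < 1 \<and> f_fun r (m0 r) = \<beta>)"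

definition r1 :: "real \<Rightarrow> real" where
  "r1 \<beta> = 1 - 2/\<beta> - 2/(3*\<beta>) * ln (3*\<beta>/2 - 2)"

definition p_sol :: "real \<Rightarrow> real \<Rightarrow> real" where
  "p_sol \<beta> r = (THE t. 0 < t \<and> t < m0 r \<and> f_fun r t = \<beta>)"

definition u_sol :: "real \<Rightarrow> real \<Rightarrow> real" where
  "u_sol \<beta> r = (THE t. m0 r < t \<and> t < k_fun r \<and> f_fun r t = \<beta>)"

definition q_sol :: "real \<Rightarrow> real \<Rightarrow> real" where
  "q_sol \<beta> r = (THE t. 1/3 < t \<and> t < 1/2 \<and> f_fun r t = \<beta>)"

definition m0_pt :: "real \<Rightarrow> real \<Rightarrow> real^2" where
  "m0_pt \<beta> r = pt (p_sol \<beta> r) (p_sol \<beta> r)"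

definition p_pt :: "real \<Rightarrow> real \<Rightarrow> real^2" where
  "p_pt \<beta> r = pt (u_sol \<beta> r) (u_sol \<beta> r)"

definition sigma0_pt :: "real \<Rightarrow> real \<Rightarrow> real^2" where
  "sigma0_pt \<beta> r = pt (q_sol \<beta> r) (q_sol \<beta> r)"

definition pderiv2 :: "2 \<Rightarrow> (real^2 \<Rightarrow> real) \<Rightarrow> real^2 \<Rightarrow> real" where
  "pderiv2 i f x = deriv (\<lambda>t. f (x + t *\<^sub>R axis i 1)) 0"

definition hessian :: "(real^2 \<Rightarrow> real) \<Rightarrow> real^2 \<Rightarrow> real^2^2" where
  "hessian f x = (\<chi> i j. pderiv2 i (pderiv2 j f) x)"

definition is_eigenvalue :: "real^2^2 \<Rightarrow> real \<Rightarrow> bool" where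
  "is_eigenvalue A c \<longleftrightarrow> (\<exists>v. v \<noteq> 0 \<and> A *v v = c *\<^sub>R v)"

definition critical_point :: "(real^2 \<Rightarrow> real) \<Rightarrow> real^2 \<Rightarrow> bool" where
  "critical_point f x \<longleftrightarrow> (f has_derivative (\<lambda>h. 0)) (at x)"

definition local_min_on :: "(real^2 \<Rightarrow> real) \<Rightarrow> (real^2) set \<Rightarrow> real^2 \<Rightarrow> bool" where
  "local_min_on f S x \<longleftrightarrow> x \<in> S \<and> (\<exists>e>0. \<forall>y\<in>S. dist y x < e \<longrightarrow> f x \<le> f y)"

definition local_max_on :: "(real^2 \<Rightarrow> real) \<Rightarrow> (real^2) set \<Rightarrow> real^2 \<Rightarrow> bool" where
  "local_max_on f S x \<longleftrightarrow> x \<in> S \<and> (\<exists>e>0. \<forall>y\<in>S. dist y x < e \<longrightarrow> f y \<le> f x)"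

definition saddle_point :: "(real^2 \<Rightarrow> real) \<Rightarrow> real^2 \<Rightarrow> bool" where
  "saddle_point f x \<longleftrightarrow> critical_point f x \<and>
     (\<exists>l1 l2. l1 > 0 \<and> l2 < 0 \<and> is_eigenvalue (hessian f x) l1 \<and> is_eigenvalue (hessian f x) l2)"

end

theory Submission
  imports Defs
begin


lemma dec_from_deriv:
  fixes f :: "real \<Rightarrow> real"
  assumes "a < b" "\<And>x. a \<le> x \<Longrightarrow> x \<le> b \<Longrightarrow> DERIV f x :> f' x"
    "\<And>x. a < x \<Longrightarrow> x < b \<Longrightarrow> f' x < 0"
  shows "f b < f a"
  apply (rule DERIV_neg_imp_decreasing_open[OF assms(1)])
  subgoal for x using assms(2)[of x] assms(3)[of x] by (intro exI[of _ "f' x"]) simp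
  apply (rule DERIV_atLeastAtMost_imp_continuous_on)
  subgoal for x using assms(2)[of x] by blast
  done

lemma inc_from_deriv:
  fixes f :: "real \<Rightarrow> real"
  assumes "a < b" "\<And>x. a \<le> x \<Longrightarrow> x \<le> b \<Longrightarrow> DERIV f x :> f' x"
    "\<And>x. a < x \<Longrightarrow> x < b \<Longrightarrow> f' x > 0"
  shows "f a < f b"
  apply (rule DERIV_pos_imp_increasing_open[OF assms(1)])
  subgoal for x using assms(2)[of x] assms(3)[of x] by (intro exI[of _ "f' x"]) simp
  apply (rule DERIV_atLeastAtMost_imp_continuous_on)
  subgoal for x using assms(2)[of x] by blast
  done

definition gg :: "real \<Rightarrow> real" where "gg t = ln ((1 - 2*t)/t)"

lemma gg_alt: "0 < t \<Longrightarrow> t < 1/2 \<Longrightarrow> gg t = ln (1 - 2*t) - ln t"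
  unfolding gg_def by (simp add: ln_div)

lemma gg_deriv: "0 < t \<Longrightarrow> t < 1/2 \<Longrightarrow> (gg has_real_derivative (-1/(t*(1-2*t)))) (at t)"
proof -
  assume a: "0 < t" "t < 1/2"
  have "((\<lambda>t. ln (1 - 2*t) - ln t) has_real_derivative (-1/(t*(1-2*t)))) (at t)"
    using a apply (auto intro!: derivative_eq_intros)
    by (simp add: field_simps)
  then show ?thesis
    apply (rule has_field_derivative_transform_within_open[where S="{0<..<1/2}"])
    using a by (auto simp: gg_alt)
qed

lemma gg_pos: "0 < t \<Longrightarrow> t < 1/3 \<Longrightarrow> gg t > 0"
  unfolding gg_def by (subst ln_gt_zero_iff) (auto simp: field_simps)
lemma gg_neg: "1/3 < t \<Longrightarrow> t < 1/2 \<Longrightarrow> gg t < 0"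
  unfolding gg_def by (subst ln_less_zero_iff) (auto simp: field_simps)
lemma gg_third: "gg (1/3) = 0" unfolding gg_def by simp

lemma h_gg: "h_fun t = -3*t*(1-2*t)*gg t - 3*t + 1" unfolding h_fun_def gg_def by simp
lemma f_gg: "f_fun r t = 2/(3*(1-r-3*t)) * gg t" unfolding f_fun_def gg_def by simp

lemma h_deriv: "0 < t \<Longrightarrow> t < 1/2 \<Longrightarrow> (h_fun has_real_derivative ((12*t-3)*gg t)) (at t)"
proof -
  assume a: "0 < t" "t < 1/2"
  have "((\<lambda>t. -3*t*(1-2*t)*gg t - 3*t + 1) has_real_derivative ((12*t-3)*gg t)) (at t)"
    using a apply (auto intro!: derivative_eq_intros gg_deriv)
    by (simp add: field_simps)
  then show ?thesis by (simp add: h_gg[abs_def])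
qed

lemma h_cont: "0 < a \<Longrightarrow> b < 1/2 \<Longrightarrow> continuous_on {a..b} h_fun"
  apply (rule DERIV_atLeastAtMost_imp_continuous_on)
  subgoal for x by (rule exI, rule h_deriv) auto
  done

lemma h_dec1: "0 < a \<Longrightarrow> a < b \<Longrightarrow> b \<le> 1/4 \<Longrightarrow> h_fun b < h_fun a"
  apply (rule dec_from_deriv[where f=h_fun and f'="\<lambda>x. (12*x-3)*gg x"])
  subgoal by simp
  subgoal for x by (rule h_deriv) auto
  subgoal for x by (rule mult_neg_pos) (use gg_pos[of x] in auto)
  done

lemma h_third: "h_fun (1/3) = 0" by (simp add: h_gg gg_third)

lemma h_neg1: "1/4 \<le> t \<Longrightarrow> t < 1/3 \<Longrightarrow> h_fun t < 0"
proof -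
  assume a: "1/4 \<le> t" "t < 1/3"
  have "h_fun t < h_fun (1/3)"
    apply (rule inc_from_deriv[where f=h_fun and f'="\<lambda>x. (12*x-3)*gg x"])
    subgoal using a by simp
    subgoal for x by (rule h_deriv) (use a in auto)
    subgoal for x by (rule mult_pos_pos) (use gg_pos[of x] a in auto)
    done
  then show ?thesis by (simp add: h_third)
qed

lemma h_neg2: "1/3 < t \<Longrightarrow> t < 1/2 \<Longrightarrow> h_fun t < 0"
proof -
  assume a: "1/3 < t" "t < 1/2"
  have "h_fun t < h_fun (1/3)"
    apply (rule dec_from_deriv[where f=h_fun and f'="\<lambda>x. (12*x-3)*gg x"])
    subgoal using a by simp
    subgoal for x by (rule h_deriv) (use a in auto)
    subgoal for x by (rule mult_pos_neg) (use gg_neg[of x] a in auto)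
    done
  then show ?thesis by (simp add: h_third)
qed

lemma h_lt1: "0 < t \<Longrightarrow> t < 1/3 \<Longrightarrow> h_fun t < 1"
proof -
  assume a: "0 < t" "t < 1/3"
  have p: "0 < (3*t*(1-2*t))*gg t" by (rule mult_pos_pos) (use a gg_pos[OF a] in simp_all)
  have "h_fun t = 1 - 3*t - (3*t*(1-2*t))*gg t" unfolding h_gg by (simp add: algebra_simps)
  then show ?thesis using p a by linarith
qed

lemma xlnx: "((\<lambda>t::real. t * ln t) \<longlongrightarrow> 0) (at_right 0)"
proof -
  have "((\<lambda>x. ln (inverse x) / inverse x) \<longlongrightarrow> 0) (at_right (0::real))"
    using filterlim_compose[OF ln_x_over_x_tendsto_0 filterlim_inverse_at_top_right] by simp
  then have "((\<lambda>x. - (ln (inverse x) / inverse x)) \<longlongrightarrow> 0) (at_right (0::real))"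
    using tendsto_minus by fastforce
  moreover have "eventually (\<lambda>x. - (ln (inverse x) / inverse x) = x * ln x) (at_right (0::real))"
    unfolding eventually_at_right_field by (rule exI[of _ 1]) (simp add: ln_inverse divide_inverse)
  ultimately show ?thesis using tendsto_cong by fastforce
qed

lemma h_lim: "(h_fun \<longlongrightarrow> 1) (at_right 0)"
proof -
  have "((\<lambda>t. -3*t*(1-2*t)*ln (1-2*t) + 3*(1-2*t)*(t*ln t) - 3*t + 1) \<longlongrightarrow>
      -3*0*(1-2*0)*ln (1-2*0) + 3*(1-2*0)*0 - 3*0 + 1) (at_right (0::real))"
    by (intro tendsto_intros xlnx) auto
  moreover have "eventually (\<lambda>t. -3*t*(1-2*t)*ln (1-2*t) + 3*(1-2*t)*(t*ln t) - 3*t + 1 = h_fun t) (at_right (0::real))"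
    unfolding eventually_at_right_field
    by (rule exI[of _ "1/2"]) (auto simp: h_gg gg_alt algebra_simps)
  ultimately show ?thesis using tendsto_cong by fastforce
qed


lemma k_fun_simp: "k_fun r = (1 - r)/3" by (simp add: k_fun_def)

lemma h_at_k: "0 < r \<Longrightarrow> r < 1 \<Longrightarrow> h_fun (k_fun r) < r"
proof -
  assume a: "0 < r" "r < 1"
  define k where "k = k_fun r"
  have k: "0 < k" "k < 1/3" "r = 1 - 3*k" using a by (auto simp: k_def k_fun_def field_simps)
  have p: "0 < (3*k*(1-2*k))*gg k" by (rule mult_pos_pos) (use k gg_pos[of k] in simp_all)
  have "h_fun k = 1 - 3*k - (3*k*(1-2*k))*gg k" unfolding h_gg by (simp add: algebra_simps)
  then show ?thesis using p k unfolding k_def by linarith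
qed

lemma h_pos_lt: "0 < t \<Longrightarrow> t < 1/3 \<Longrightarrow> h_fun t > 0 \<Longrightarrow> t < 1/4"
  using h_neg1[of t] by linarith

lemma h_inj: "0 < t \<Longrightarrow> t < 1/3 \<Longrightarrow> 0 < s \<Longrightarrow> s < 1/3 \<Longrightarrow> h_fun t = h_fun s \<Longrightarrow> h_fun t > 0 \<Longrightarrow> t = s"
proof -
  assume a: "0 < t" "t < 1/3" "0 < s" "s < 1/3" "h_fun t = h_fun s" "h_fun t > 0"
  have t4: "t < 1/4" using h_pos_lt a by auto
  have s4: "s < 1/4" using h_pos_lt[of s] a by auto
  show "t = s"
  proof (rule ccontr)
    assume "t \<noteq> s"
    then consider "t < s" | "s < t" by linarith
    then show False
    proof cases
      case 1 then show False using h_dec1[of t s] a s4 by simp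
    next
      case 2 then show False using h_dec1[of s t] a t4 by simp
    qed
  qed
qed

lemma m0_exists: "0 < r \<Longrightarrow> r < 1 \<Longrightarrow> \<exists>t. 0 < t \<and> t < k_fun r \<and> h_fun t = r"
proof -
  assume a: "0 < r" "r < 1"
  define k where "k = k_fun r"
  have k: "0 < k" "k < 1/3" using a by (auto simp: k_def k_fun_def)
  have hk: "h_fun k < r" using h_at_k a k_def by simp
  have "eventually (\<lambda>t. h_fun t > r) (at_right 0)"
    using order_tendstoD(1)[OF h_lim a(2)] .
  then obtain b where b: "b > 0" "\<And>y. 0 < y \<Longrightarrow> y < b \<Longrightarrow> h_fun y > r"
    unfolding eventually_at_right_field by auto
  define e where "e = min b k / 2"
  have e: "0 < e" "e < b" "e < k" using b k by (auto simp: e_def)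
  have he: "h_fun e > r" using b e by simp
  obtain x where x: "e \<le> x" "x \<le> k" "h_fun x = r"
    using IVT2'[of h_fun k r e] hk he e h_cont[of e k] k by force
  have "x \<noteq> k" using x hk by auto
  then show ?thesis using x e k unfolding k_def by (intro exI[of _ x]) auto
qed

lemma m0_eq: "0 < r \<Longrightarrow> r < 1 \<Longrightarrow> 0 < t \<Longrightarrow> t < k_fun r \<Longrightarrow> h_fun t = r \<Longrightarrow> m0 r = t"
  unfolding m0_def
  apply (rule the_equality)
  apply simp
  subgoal for s using h_inj[of s t] by (auto simp: k_fun_def)
  done

lemma m0_props: assumes "0 < r" "r < 1"
  shows "0 < m0 r" "m0 r < k_fun r" "h_fun (m0 r) = r" "m0 r < 1/4"
proof -
  obtain t where t: "0 < t" "t < k_fun r" "h_fun t = r" using m0_exists assms by blast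
  have "m0 r = t" using m0_eq assms t by blast
  then show "0 < m0 r" "m0 r < k_fun r" "h_fun (m0 r) = r" using t by auto
  then show "m0 r < 1/4" using h_pos_lt[of "m0 r"] assms by (auto simp: k_fun_def)
qed

lemma h_lt_m0: assumes "0 < r" "r < 1" "0 < t" "t < m0 r" shows "h_fun t > r"
  using h_dec1[of t "m0 r"] m0_props[OF assms(1,2)] assms by simp

lemma h_gt_m0: assumes "0 < r" "r < 1" "m0 r < t" "t < 1/3" shows "h_fun t < r"
proof (cases "t \<le> 1/4")
  case True then show ?thesis using h_dec1[of "m0 r" t] m0_props[OF assms(1,2)] assms by simp
next
  case False then show ?thesis using h_neg1[of t] assms by simp
qed

lemma f_deriv: assumes "0 < t" "t < 1/2" "1 - r - 3*t \<noteq> 0"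
  shows "(f_fun r has_real_derivative (2*(r - h_fun t)/(3*t*(1-2*t)*(1-r-3*t)^2))) (at t)"
proof -
  have dD: "((\<lambda>t. 1-r-3*t) has_real_derivative -3) (at t)" by (auto intro!: derivative_eq_intros)
  have dI: "((\<lambda>t. inverse (1-r-3*t)) has_real_derivative (- (-3 * inverse ((1-r-3*t) ^ Suc (Suc 0))))) (at t)"
    by (rule DERIV_inverse_fun[OF dD]) (use assms in simp)
  have dF: "((\<lambda>t. 2/3 * inverse (1-r-3*t) * gg t) has_real_derivative
      ((2/3 * (- (-3 * inverse ((1-r-3*t) ^ Suc (Suc 0))))) * gg t + (-1/(t*(1-2*t))) * (2/3 * inverse (1-r-3*t)))) (at t)"
    by (rule DERIV_mult[OF DERIV_cmult[OF dI] gg_deriv]) (use assms in auto)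
  have alg: "\<And>D t u g::real. D \<noteq> 0 \<Longrightarrow> t \<noteq> 0 \<Longrightarrow> u \<noteq> 0 \<Longrightarrow>
     (2/3 * (- (-3 * inverse (D ^ Suc (Suc 0))))) * g + (-1/(t*u)) * (2/3 * inverse D) = 2*(3*t*u*g - D)/(3*t*u*D^2)"
    by (simp add: field_simps power2_eq_square)
  have rh: "r - h_fun t = 3*t*(1-2*t)*gg t - (1-r-3*t)" unfolding h_gg by (simp add: algebra_simps)
  have e: "(2/3 * (- (-3 * inverse ((1-r-3*t) ^ Suc (Suc 0))))) * gg t + (-1/(t*(1-2*t))) * (2/3 * inverse (1-r-3*t))
      = 2*(r - h_fun t)/(3*t*(1-2*t)*(1-r-3*t)^2)"
    unfolding rh using alg[of "1-r-3*t" t "1-2*t" "gg t"] assms by simp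
  have fe: "f_fun r = (\<lambda>t. 2/3 * inverse (1-r-3*t) * gg t)"
    by (rule ext) (simp only: f_gg divide_inverse inverse_mult_distrib mult.assoc)
  show ?thesis using dF unfolding e fe .
qed


lemma den_pos: "0 < (x::real) \<Longrightarrow> x < 1/2 \<Longrightarrow> D \<noteq> 0 \<Longrightarrow> 0 < 3*x*(1-2*x)*D^2"
  by (intro mult_pos_pos) auto

lemma f_cont: assumes "0 < a" "b < 1/2" "\<And>x. a \<le> x \<Longrightarrow> x \<le> b \<Longrightarrow> 1 - r - 3*x \<noteq> 0"
  shows "continuous_on {a..b} (f_fun r)"
  apply (rule DERIV_atLeastAtMost_imp_continuous_on)
  subgoal for x by (rule exI, rule f_deriv) (use assms in auto)
  done

lemma f_dec: assumes "0 < r" "r < 1" "0 < a" "a < b" "b \<le> m0 r"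
  shows "f_fun r b < f_fun r a"
proof -
  note m = m0_props[OF assms(1,2)]
  show ?thesis
  apply (rule dec_from_deriv[where f="f_fun r" and f'="\<lambda>x. 2*(r - h_fun x)/(3*x*(1-2*x)*(1-r-3*x)^2)"])
  subgoal using assms by simp
  subgoal for x by (rule f_deriv) (use assms m in \<open>auto simp: k_fun_def\<close>)
  subgoal for x
    apply (rule divide_neg_pos)
    subgoal using h_lt_m0[of r x] assms by simp
    apply (rule den_pos) using assms m by (auto simp: k_fun_def)
  done
qed

lemma f_inc: assumes "0 < r" "r < 1" "m0 r \<le> a" "a < b" "b < k_fun r"
  shows "f_fun r a < f_fun r b"
proof -
  note m = m0_props[OF assms(1,2)]
  show ?thesis
  apply (rule inc_from_deriv[where f="f_fun r" and f'="\<lambda>x. 2*(r - h_fun x)/(3*x*(1-2*x)*(1-r-3*x)^2)"])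
  subgoal using assms by simp
  subgoal for x by (rule f_deriv) (use assms m in \<open>auto simp: k_fun_def\<close>)
  subgoal for x
    apply (rule divide_pos_pos)
    subgoal using h_gt_m0[of r x] assms by (simp add: k_fun_def)
    apply (rule den_pos) using assms m by (auto simp: k_fun_def)
  done
qed

lemma f_inc2: assumes "0 < r" "1/3 \<le> a" "a < b" "b < 1/2"
  shows "f_fun r a < f_fun r b"
  apply (rule inc_from_deriv[where f="f_fun r" and f'="\<lambda>x. 2*(r - h_fun x)/(3*x*(1-2*x)*(1-r-3*x)^2)"])
  subgoal using assms by simp
  subgoal for x by (rule f_deriv) (use assms in auto)
  subgoal for x
    apply (rule divide_pos_pos)
    subgoal using h_neg2[of x] assms by simp
    apply (rule den_pos) using assms by auto
  done

lemma gg_dec: assumes "0 < a" "a < b" "b < 1/2" shows "gg b < gg a"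
  apply (rule dec_from_deriv[where f=gg and f'="\<lambda>x. -1/(x*(1-2*x))"])
  subgoal using assms by simp
  subgoal for x by (rule gg_deriv) (use assms in auto)
  subgoal for x using assms by (simp add: divide_neg_pos)
  done

definition phi :: "real \<Rightarrow> real" where "phi r = f_fun r (m0 r)"

lemma phi_le: assumes "0 < r" "r < 1" "0 < t" "t < k_fun r" "t \<noteq> m0 r"
  shows "phi r < f_fun r t"
proof -
  note m = m0_props[OF assms(1,2)]
  consider "t < m0 r" | "m0 r < t" using assms by linarith
  then show ?thesis
  proof cases
    case 1 then show ?thesis using f_dec[of r t "m0 r"] assms unfolding phi_def by simp
  next
    case 2 then show ?thesis using f_inc[of r "m0 r" t] assms unfolding phi_def by simp
  qed
qed

lemma f_mono_r: assumes "0 < t" "t < 1/3" "r < r'" "0 < 1 - r' - 3*t"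
  shows "f_fun r t < f_fun r' t"
proof -
  have "2/(3*(1-r-3*t)) < 2/(3*(1-r'-3*t))"
    by (rule divide_strict_left_mono) (use assms in auto)
  then show ?thesis unfolding f_gg using gg_pos[OF assms(1,2)] by (rule mult_strict_right_mono)
qed

lemma phi_mono: assumes "0 < r" "r < r'" "r' < 1" shows "phi r < phi r'"
proof -
  note m' = m0_props[of r'] 
  have m: "0 < m0 r'" "m0 r' < k_fun r'" "h_fun (m0 r') = r'" "m0 r' < 1/4" using m' assms by auto
  have "phi r \<le> f_fun r (m0 r')"
  proof (cases "m0 r' = m0 r")
    case True then show ?thesis by (simp add: phi_def)
  next
    case False then show ?thesis using phi_le[of r "m0 r'"] assms m by (simp add: k_fun_def)
  qed
  also have "\<dots> < f_fun r' (m0 r')"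
    by (rule f_mono_r) (use m assms in \<open>auto simp: k_fun_def\<close>)
  finally show ?thesis by (simp add: phi_def)
qed


lemma t_lt_k_h: assumes "0 < t" "t < 1/3" shows "t < k_fun (h_fun t)"
proof -
  have p: "0 < (3*t*(1-2*t))*gg t" by (rule mult_pos_pos) (use assms gg_pos[OF assms] in simp_all)
  have "h_fun t = 1 - 3*t - (3*t*(1-2*t))*gg t" unfolding h_gg by (simp add: algebra_simps)
  then have "3*t < 1 - h_fun t" using p by linarith
  then show ?thesis unfolding k_fun_def by (simp add: field_simps)
qed

lemma m0_of_h: assumes "0 < t" "t < 1/3" "0 < h_fun t" shows "m0 (h_fun t) = t"
  by (rule m0_eq) (use assms h_lt1[of t] t_lt_k_h[of t] in auto)

lemma m0_mono: assumes "0 < r" "r < r'" "r' < 1" shows "m0 r' < m0 r"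
proof (rule ccontr)
  assume "\<not> m0 r' < m0 r"
  then have c: "m0 r \<le> m0 r'" by simp
  note m = m0_props[of r] m0_props[of r']
  show False
  proof (cases "m0 r = m0 r'")
    case True then show False using m assms by auto
  next
    case False
    then have "h_fun (m0 r') < h_fun (m0 r)" using h_dec1[of "m0 r" "m0 r'"] c m assms by auto
    then show False using m assms by auto
  qed
qed

lemma m0_cont: assumes "0 < r0" "r0 < 1" shows "isCont m0 r0"
proof -
  define a where "a = m0 r0 / 2"
  define b where "b = m0 (r0/2)"
  note m1 = m0_props[OF assms] 
  note m2 = m0_props[of "r0/2"]
  have ab: "0 < a" "a < m0 r0" "m0 r0 < b" "b < 1/4" "h_fun b = r0/2"
    using m1 m2 assms m0_mono[of "r0/2" r0] by (auto simp: a_def b_def)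
  have ha: "r0 < h_fun a" using h_dec1[of a "m0 r0"] ab m1 by simp
  have c: "continuous_on {a..b} h_fun" by (rule h_cont) (use ab in auto)
  have inv: "\<forall>x\<in>{a..b}. m0 (h_fun x) = x"
  proof
    fix x assume x: "x \<in> {a..b}"
    have "h_fun b \<le> h_fun x"
      using h_dec1[of x b] x ab by (cases "x = b") auto
    then show "m0 (h_fun x) = x" by (intro m0_of_h) (use x ab assms in auto)
  qed
  have ci: "continuous_on (h_fun ` {a..b}) m0"
    by (rule continuous_on_inv[OF c compact_Icc inv])
  have sub: "{r0/2<..<h_fun a} \<subseteq> h_fun ` {a..b}"
  proof
    fix y assume y: "y \<in> {r0/2<..<h_fun a}"
    obtain x where "a \<le> x" "x \<le> b" "h_fun x = y"
      using IVT2'[of h_fun b y a, OF _ _ _ c] y ab by force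
    then show "y \<in> h_fun ` {a..b}" by force
  qed
  have "continuous_on {r0/2<..<h_fun a} m0" using continuous_on_subset[OF ci sub] .
  then show ?thesis using ha assms
    by (simp add: continuous_on_eq_continuous_at)
qed

lemma phi_cont: "continuous_on {0<..<1} phi"
proof -
  have cm: "continuous_on {0<..<1} m0"
    by (rule continuous_at_imp_continuous_on) (auto intro: m0_cont)
  have pos: "\<And>r. r \<in> {0<..<1} \<Longrightarrow> 0 < m0 r \<and> m0 r < 1/4 \<and> m0 r < k_fun r"
    using m0_props by auto
  have "continuous_on {0<..<1} (\<lambda>r. 2/(3*(1-r-3*m0 r)) * ln ((1-2*m0 r)/m0 r))"
    apply (intro continuous_intros cm)
    apply (auto simp: k_fun_def dest!: pos)
    done
  then show ?thesis unfolding phi_def f_fun_def .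
qed


lemma ln_lower: "0 < (y::real) \<Longrightarrow> 1 - 1/y \<le> ln y"
  using ln_le_minus_one[of "1/y"] by (simp add: ln_div)

lemma phi_small: "phi (1/100) < 2"
proof -
  have m: "m0 (1/100) < 1/4" using m0_props[of "1/100"] by simp
  have "phi (1/100) < f_fun (1/100) (1/4)"
    by (rule phi_le) (use m in \<open>auto simp: k_fun_def\<close>)
  also have "f_fun (1/100) (1/4) = (50/18) * ln 2"
    unfolding f_fun_def by simp
  also have "\<dots> < 2" using ln2_le_25_over_36 by simp
  finally show ?thesis .
qed

lemma phi_big: assumes "\<beta> > 0" shows "phi (1 - 3/(9*\<beta>+6)) > \<beta>"
proof -
  define rb where "rb = 1 - 3/(9*\<beta>+6)"
  define k where "k = 1/(9*\<beta>+6)"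
  have k: "0 < k" "k < 1/6" "k_fun rb = k" "rb = 1 - 3*k" using assms
    by (auto simp: k_def rb_def k_fun_def field_simps)
  have rb: "0 < rb" "rb < 1" using k by auto
  define m where "m = m0 rb"
  have m: "0 < m" "m < k" using m0_props[OF rb] k by (auto simp: m_def)
  define y where "y = (1-2*m)/m"
  have "1/m > 1/k" using m by (simp add: divide_strict_left_mono)
  moreover have "1/k = 9*\<beta>+6" by (simp add: k_def)
  moreover have "y = 1/m - 2" using m by (simp add: y_def field_simps)
  ultimately have y: "y > 2" using assms by simp
  have ly: "ln y > 1/2"
  proof -
    have "1/y < 1/2" using y by (simp add: divide_strict_left_mono)
    then show ?thesis using ln_lower[of y] y by linarith
  qed
  define D where "D = 1 - rb - 3*m"
  have D: "0 < D" "D \<le> 3*k" using m k by (auto simp: D_def)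
  have "2/(9*k) \<le> 2/(3*D)"
    using D k by (simp add: field_simps)
  moreover have "2/(3*D) * (1/2) < 2/(3*D) * ln y"
    by (rule mult_strict_left_mono) (use ly D in auto)
  ultimately have "2/(9*k) * (1/2) < 2/(3*D) * ln y"
    by (meson order_le_less_trans mult_right_mono zero_le_divide_iff zero_le_one zero_le_numeral)
  moreover have "phi rb = 2/(3*D) * ln y" by (simp add: phi_def f_fun_def D_def y_def m_def)
  moreover have "2/(9*k) * (1/2) > \<beta>" using assms by (simp add: k_def field_simps)
  ultimately have "phi rb > \<beta>" by linarith
  then show ?thesis by (simp add: rb_def)
qed

lemma r2_props: assumes "\<beta> > 2"
  shows "0 < r2 \<beta>" "r2 \<beta> < 1" "phi (r2 \<beta>) = \<beta>"
proof -
  define rb where "rb = 1 - 3/(9*\<beta>+6)"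
  have rb: "1/100 < rb" "rb < 1" using assms by (auto simp: rb_def field_simps)
  have pb: "phi rb > \<beta>" using phi_big[of \<beta>] assms by (simp add: rb_def)
  have cont: "continuous_on {1/100..rb} phi"
    by (rule continuous_on_subset[OF phi_cont]) (use rb in auto)
  obtain r where r: "1/100 \<le> r" "r \<le> rb" "phi r = \<beta>"
    using IVT'[of phi "1/100" \<beta> rb, OF _ _ _ cont] phi_small pb rb assms by force
  have "r2 \<beta> = r"
    unfolding r2_def
  proof (rule the_equality)
    show "0 < r \<and> r < 1 \<and> f_fun r (m0 r) = \<beta>" using r rb by (simp add: phi_def)
  next
    fix s assume s: "0 < s \<and> s < 1 \<and> f_fun s (m0 s) = \<beta>"
    show "s = r"
    proof (rule ccontr)
      assume "s \<noteq> r"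
      then consider "s < r" | "r < s" by linarith
      then show False
        using phi_mono[of s r] phi_mono[of r s] s r rb by (cases; auto simp: phi_def)
    qed
  qed
  then show "0 < r2 \<beta>" "r2 \<beta> < 1" "phi (r2 \<beta>) = \<beta>" using r rb by auto
qed

lemma lt_r2: assumes "\<beta> > 2" "0 < r" "r < r2 \<beta>" shows "phi r < \<beta>"
  using phi_mono[of r "r2 \<beta>"] r2_props[OF assms(1)] assms by simp


lemma p_exists: assumes "\<beta> > 0" "0 < r" "r < 1" "phi r < \<beta>"
  shows "\<exists>t. 0 < t \<and> t < m0 r \<and> f_fun r t = \<beta>"
proof -
  note m = m0_props[OF assms(2,3)]
  define L where "L = max (1/m0 r) ((3/2)*\<beta>*(1-r)) + 1"
  define E where "E = exp L"
  define t0 where "t0 = 1/(E+2)"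
  have L: "L > 1/m0 r" "L > (3/2)*\<beta>*(1-r)" unfolding L_def by auto
  have E: "E \<ge> 1 + L" "E > 0" unfolding E_def using exp_ge_add_one_self by auto
  have "1/m0 r < E + 2" using L E by linarith
  then have t0m: "t0 < m0 r" unfolding t0_def using m E by (simp add: field_simps)
  have t0p: "0 < t0" unfolding t0_def using E by simp
  have ggt: "gg t0 = L"
  proof -
    have "(1 - 2*t0)/t0 = E" unfolding t0_def using E by (simp add: field_simps)
    then show ?thesis unfolding gg_def E_def by simp
  qed
  define D where "D = 1 - r - 3*t0"
  have D: "0 < D" "D < 1 - r" using t0m m t0p by (auto simp: D_def k_fun_def)
  have "2/(3*(1-r)) < 2/(3*D)" by (rule divide_strict_left_mono) (use D in auto)
  then have "2/(3*(1-r)) * ((3/2)*\<beta>*(1-r)) < 2/(3*D) * L"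
    using L(2) assms D by (intro mult_strict_mono) auto
  moreover have "2/(3*(1-r)) * ((3/2)*\<beta>*(1-r)) = \<beta>" using assms by (simp add: field_simps)
  ultimately have ft0: "f_fun r t0 > \<beta>" unfolding f_gg ggt D_def by simp
  have c: "continuous_on {t0..m0 r} (f_fun r)"
    by (rule f_cont) (use t0p m in \<open>auto simp: k_fun_def\<close>)
  obtain x where x: "t0 \<le> x" "x \<le> m0 r" "f_fun r x = \<beta>"
    using IVT2'[of "f_fun r" "m0 r" \<beta> t0, OF _ _ _ c] ft0 assms t0m by (force simp: phi_def)
  have "x \<noteq> m0 r" using x assms by (auto simp: phi_def)
  then show ?thesis using x t0p by (intro exI[of _ x]) auto
qed

lemma p_props: assumes "\<beta> > 0" "0 < r" "r < 1" "phi r < \<beta>"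
  shows "0 < p_sol \<beta> r" "p_sol \<beta> r < m0 r" "f_fun r (p_sol \<beta> r) = \<beta>"
proof -
  obtain t where t: "0 < t" "t < m0 r" "f_fun r t = \<beta>" using p_exists[OF assms] by blast
  have "p_sol \<beta> r = t"
    unfolding p_sol_def
  proof (rule the_equality)
    fix s assume s: "0 < s \<and> s < m0 r \<and> f_fun r s = \<beta>"
    show "s = t"
    proof (rule ccontr)
      assume "s \<noteq> t"
      then consider "s < t" | "t < s" by linarith
      then show False
        using f_dec[of r s t] f_dec[of r t s] s t assms by (cases; auto)
    qed
  qed (use t in auto)
  then show "0 < p_sol \<beta> r" "p_sol \<beta> r < m0 r" "f_fun r (p_sol \<beta> r) = \<beta>" using t by auto
qed

lemma u_exists: assumes "\<beta> > 0" "0 < r" "r < 1" "phi r < \<beta>"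
  shows "\<exists>t. m0 r < t \<and> t < k_fun r \<and> f_fun r t = \<beta>"
proof -
  note m = m0_props[OF assms(2,3)]
  define k where "k = k_fun r"
  have k: "0 < k" "k < 1/3" using assms by (auto simp: k_def k_fun_def)
  have gk: "gg k > 0" using gg_pos k by auto
  have a1: "0 < k - m0 r" using m by (simp add: k_def)
  have a2: "0 < 2*gg k/(9*\<beta>)" using gk assms by simp
  define mm where "mm = min (k - m0 r) (2*gg k/(9*\<beta>))"
  have mn: "mm \<le> k - m0 r" "mm \<le> 2*gg k/(9*\<beta>)" "0 < mm" using a1 a2 by (auto simp: mm_def)
  define \<delta> where "\<delta> = mm / 2"
  have \<delta>1: "0 < \<delta>" unfolding \<delta>_def using mn by linarith
  have \<delta>2: "\<delta> < k - m0 r" unfolding \<delta>_def using mn by linarith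
  have \<delta>3: "\<delta> < 2*gg k/(9*\<beta>)" unfolding \<delta>_def using mn by linarith
  note \<delta> = \<delta>1 \<delta>2 \<delta>3
  define t1 where "t1 = k - \<delta>"
  have t1: "m0 r < t1" "t1 < k" using \<delta> by (auto simp: t1_def)
  have D: "1 - r - 3*t1 = 3*\<delta>" by (simp add: t1_def k_def k_fun_def field_simps)
  have gt: "gg k < gg t1" by (rule gg_dec) (use t1 m k in auto)
  have "\<beta> * (9*\<delta>) < 2 * gg k" using \<delta>(3) assms by (simp add: field_simps)
  then have "\<beta> < 2 * gg t1 / (9*\<delta>)" using gt \<delta> by (simp add: field_simps)
  moreover have "f_fun r t1 = 2 * gg t1 / (9*\<delta>)" unfolding f_gg D by simp
  ultimately have ft1: "f_fun r t1 > \<beta>" by simp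
  have c: "continuous_on {m0 r..t1} (f_fun r)"
    by (rule f_cont) (use t1 m k in \<open>auto simp: k_def k_fun_def\<close>)
  obtain x where x: "m0 r \<le> x" "x \<le> t1" "f_fun r x = \<beta>"
    using IVT'[of "f_fun r" "m0 r" \<beta> t1, OF _ _ _ c] ft1 assms t1 by (force simp: phi_def)
  have "x \<noteq> m0 r" using x assms by (auto simp: phi_def)
  then show ?thesis using x t1 unfolding k_def by (intro exI[of _ x]) auto
qed

lemma u_props: assumes "\<beta> > 0" "0 < r" "r < 1" "phi r < \<beta>"
  shows "m0 r < u_sol \<beta> r" "u_sol \<beta> r < k_fun r" "f_fun r (u_sol \<beta> r) = \<beta>"
proof -
  obtain t where t: "m0 r < t" "t < k_fun r" "f_fun r t = \<beta>" using u_exists[OF assms] by blast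
  have "u_sol \<beta> r = t"
    unfolding u_sol_def
  proof (rule the_equality)
    fix s assume s: "m0 r < s \<and> s < k_fun r \<and> f_fun r s = \<beta>"
    show "s = t"
    proof (rule ccontr)
      assume "s \<noteq> t"
      then consider "s < t" | "t < s" by linarith
      then show False
        using f_inc[of r s t] f_inc[of r t s] s t assms by (cases; auto)
    qed
  qed (use t in auto)
  then show "m0 r < u_sol \<beta> r" "u_sol \<beta> r < k_fun r" "f_fun r (u_sol \<beta> r) = \<beta>" using t by auto
qed

lemma q_exists: assumes "\<beta> > 0" "0 < r"
  shows "\<exists>t. 1/3 < t \<and> t < 1/2 \<and> f_fun r t = \<beta>"
proof -
  define L where "L = (3/2)*\<beta>*(r+1/2) + 1"
  define E where "E = exp L"
  define t2 where "t2 = E/(1+2*E)"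
  have L1: "L > (3/2)*\<beta>*(r+1/2)" unfolding L_def by simp
  have "0 < (3/2)*\<beta>*(r+1/2)" using assms by simp
  then have L: "L > (3/2)*\<beta>*(r+1/2)" "L > 0" using L1 by linarith+
  have E: "E > 1" unfolding E_def using L by simp
  have t2: "1/3 < t2" "t2 < 1/2" unfolding t2_def using E by (auto simp: field_simps)
  have ggt: "gg t2 = - L"
  proof -
    have "(1 - 2*t2)/t2 = 1/E" unfolding t2_def using E by (simp add: field_simps)
    then show ?thesis unfolding gg_def E_def by (simp add: ln_div)
  qed
  define D where "D = r + 3*t2 - 1"
  have D: "0 < D" "D < r + 1/2" using t2 assms by (auto simp: D_def)
  have mD: "1 - r - 3*t2 = - D" by (simp add: D_def)
  have f2: "f_fun r t2 = 2/(3*D) * L" unfolding f_gg ggt mD by simp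
  have "2/(3*(r+1/2)) < 2/(3*D)" by (rule divide_strict_left_mono) (use D in auto)
  then have "2/(3*(r+1/2)) * ((3/2)*\<beta>*(r+1/2)) < 2/(3*D) * L"
    using L assms D by (intro mult_strict_mono) auto
  moreover have "2/(3*(r+1/2)) * ((3/2)*\<beta>*(r+1/2)) = \<beta>"
  proof -
    have gen: "\<And>c b::real. c \<noteq> 0 \<Longrightarrow> 2/(3*c) * ((3/2)*b*c) = b" by (simp add: field_simps)
    show ?thesis by (rule gen) (use assms in linarith)
  qed
  ultimately have ft2: "f_fun r t2 > \<beta>" unfolding f2 by simp
  have f3: "f_fun r (1/3) = 0" unfolding f_gg gg_third by simp
  have c: "continuous_on {1/3..t2} (f_fun r)"
    by (rule f_cont) (use t2 assms in auto)
  obtain x where x: "1/3 \<le> x" "x \<le> t2" "f_fun r x = \<beta>"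
    using IVT'[of "f_fun r" "1/3" \<beta> t2, OF _ _ _ c] ft2 f3 assms t2 by force
  have "x \<noteq> 1/3"
  proof
    assume "x = 1/3"
    then have "f_fun r x = f_fun r (1/3)" by (rule arg_cong)
    then show False using x(3) f3 assms by linarith
  qed
  then show ?thesis using x t2 by (intro exI[of _ x]) auto
qed

lemma q_props: assumes "\<beta> > 0" "0 < r"
  shows "1/3 < q_sol \<beta> r" "q_sol \<beta> r < 1/2" "f_fun r (q_sol \<beta> r) = \<beta>"
proof -
  obtain t where t: "1/3 < t" "t < 1/2" "f_fun r t = \<beta>" using q_exists[OF assms] by blast
  have "q_sol \<beta> r = t"
    unfolding q_sol_def
  proof (rule the_equality)
    fix s assume s: "1/3 < s \<and> s < 1/2 \<and> f_fun r s = \<beta>"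
    show "s = t"
    proof (rule ccontr)
      assume "s \<noteq> t"
      then consider "s < t" | "t < s" by linarith
      then show False
        using f_inc2[of r s t] f_inc2[of r t s] s t assms by (cases; auto)
    qed
  qed (use t in auto)
  then show "1/3 < q_sol \<beta> r" "q_sol \<beta> r < 1/2" "f_fun r (q_sol \<beta> r) = \<beta>" using t by auto
qed



definition entf :: "real \<Rightarrow> real" where "entf y = y * ln (3*y)"

definition GG :: "real \<Rightarrow> real \<Rightarrow> real \<Rightarrow> real \<Rightarrow> real" where
  "GG \<beta> r a b = -(1/2)*((1-a-b)^2 + a^2 + b^2 - (1-a-b)*a - (1-a-b)*b - a*b)
     + (1/\<beta>)*(entf (1-a-b) + entf a + entf b) + r*(1-a-b) - (r/2)*(a+b)"

definition P1 :: "real \<Rightarrow> real \<Rightarrow> real \<Rightarrow> real \<Rightarrow> real" where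
  "P1 \<beta> r a b = -(3/2)*(a - (1-a-b)) + (1/\<beta>)*(ln (3*a) - ln (3*(1-a-b))) - 3*r/2"
definition P2 :: "real \<Rightarrow> real \<Rightarrow> real \<Rightarrow> real \<Rightarrow> real" where
  "P2 \<beta> r a b = -(3/2)*(b - (1-a-b)) + (1/\<beta>)*(ln (3*b) - ln (3*(1-a-b))) - 3*r/2"

lemma sum3: "(\<Sum>k<3. g k) = g 0 + g 1 + g (2::nat)"
  by (simp add: numeral_3_eq_3 numeral_2_eq_2 add.assoc)

lemma trig:
  "cos (2 * pi * real (0::nat) / 3) = 1" "sin (2 * pi * real (0::nat) / 3) = 0"
  "cos (2 * pi * real (1::nat) / 3) = -1/2" "sin (2 * pi * real (1::nat) / 3) = sqrt 3/2"
  "cos (2 * pi * real (2::nat) / 3) = -1/2" "sin (2 * pi * real (2::nat) / 3) = -(sqrt 3/2)"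
proof -
  show "cos (2 * pi * real (0::nat) / 3) = 1" "sin (2 * pi * real (0::nat) / 3) = 0" by simp_all
  show "cos (2 * pi * real (1::nat) / 3) = -1/2" "sin (2 * pi * real (1::nat) / 3) = sqrt 3/2"
    using cos_120 sin_120 by simp_all
  have e: "2 * pi * real (2::nat) / 3 = pi/3 + pi" by simp
  show "cos (2 * pi * real (2::nat) / 3) = -1/2" unfolding e cos_periodic_pi cos_60 by simp
  show "sin (2 * pi * real (2::nat) / 3) = -(sqrt 3/2)" unfolding e sin_periodic_pi sin_60 by simp
qed

lemma sq3: "(c - a/2 - b/2)^2 + (sqrt 3/2*a - sqrt 3/2*b)^2 = c^2+a^2+b^2-c*a-c*b-a*(b::real)"
proof -
  have e: "sqrt 3/2*a - sqrt 3/2*b = sqrt 3 * ((a-b)/2)" by (simp add: algebra_simps)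
  have "(sqrt 3/2*a - sqrt 3/2*b)^2 = 3 * ((a-b)/2)^2" unfolding e by (simp only: power_mult_distrib real_sqrt_pow2 zero_le_numeral)
  then show ?thesis by (simp add: power2_eq_square algebra_simps)
qed

lemma Fb_eq: "Fb \<beta> x r = GG \<beta> r (x$1) (x$2)"
proof -
  define a where "a = x$1"
  define b where "b = x$2"
  have "Fb \<beta> x r = - (1/2) * (((1-a-b) * 1 + a * (-1/2) + b * (-1/2))\<^sup>2 + ((1-a-b)*0 + a * (sqrt 3/2) + b * (-(sqrt 3/2)))\<^sup>2)
     + (1/\<beta>) * ((1-a-b) * ln (3*(1-a-b)) + a * ln (3*a) + b * ln (3*b)) + r*(1-a-b) - (r/2)*(a+b)"
    unfolding Fb_def Let_def sum3 trig a_def b_def by simp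
  also have "((1-a-b) * 1 + a * (-1/2) + b * (-1/2))\<^sup>2 + ((1-a-b)*0 + a * (sqrt 3/2) + b * (-(sqrt 3/2)))\<^sup>2
     = (1-a-b)^2 + a^2 + b^2 - (1-a-b)*a - (1-a-b)*b - a*b"
    using sq3[of "1-a-b" a b] by (simp add: algebra_simps)
  finally show ?thesis unfolding GG_def entf_def a_def b_def by simp
qed

lemma ent_chain: "(g has_real_derivative g') (at x) \<Longrightarrow> 0 < g x \<Longrightarrow> D = (ln (3 * g x) + 1) * g' \<Longrightarrow>
   ((\<lambda>x. entf (g x)) has_real_derivative D) (at x)"
  unfolding entf_def
  by (auto intro!: derivative_eq_intros simp: field_simps)

lemma lg_chain: "(g has_real_derivative g') (at x) \<Longrightarrow> 0 < g x \<Longrightarrow> D = g' / g x \<Longrightarrow>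
   ((\<lambda>x. ln (3 * g x)) has_real_derivative D) (at x)"
  by (auto intro!: derivative_eq_intros simp: field_simps)

lemma GG_line_deriv:
  assumes "0 < a + u*da" "0 < b + u*db" "0 < 1 - (a+u*da) - (b+u*db)"
  shows "((\<lambda>u. GG \<beta> r (a+u*da) (b+u*db)) has_real_derivative
     (P1 \<beta> r (a+u*da) (b+u*db) * da + P2 \<beta> r (a+u*da) (b+u*db) * db)) (at u)"
  unfolding GG_def
  apply (intro derivative_eq_intros ent_chain refl)
  using assms apply simp_all
  apply (simp add: P1_def P2_def algebra_simps add_divide_distrib diff_divide_distrib)
  done

definition HQ :: "real \<Rightarrow> real \<Rightarrow> real \<Rightarrow> real \<Rightarrow> real \<Rightarrow> real" where
  "HQ \<beta> z1 z2 da db = -3*da^2 - 3*da*db - 3*db^2 + (1/\<beta>)*(da^2/z1 + db^2/z2 + (da+db)^2/(1-z1-z2))"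

lemma P_line_deriv:
  assumes "0 < a + u*da" "0 < b + u*db" "0 < 1 - (a+u*da) - (b+u*db)" "\<beta> \<noteq> 0"
  shows "((\<lambda>u. P1 \<beta> r (a+u*da) (b+u*db) * da + P2 \<beta> r (a+u*da) (b+u*db) * db) has_real_derivative
     HQ \<beta> (a+u*da) (b+u*db) da db) (at u)"
proof -
  define z1 where "z1 = a + u*da"
  define z2 where "z2 = b + u*db"
  define z0 where "z0 = 1 - z1 - z2"
  have pz: "0 < z1" "0 < z2" "0 < z0" using assms by (simp_all add: z1_def z2_def z0_def)
  have nz: "z1 \<noteq> 0" "z2 \<noteq> 0" "z0 \<noteq> 0" using pz by auto
  have HQz: "HQ \<beta> z1 z2 da db = -3*da^2-3*da*db-3*db^2 + (1/\<beta>)*(da^2/z1 + db^2/z2 + (da+db)^2/z0)"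
    by (simp add: HQ_def z0_def)
  have alg: "\<And>z1 z2 z0. \<beta> \<noteq> 0 \<Longrightarrow> z1 \<noteq> 0 \<Longrightarrow> z2 \<noteq> 0 \<Longrightarrow> z0 \<noteq> 0 \<Longrightarrow>
     (-(3/2)*(da - (-da-db)) + (1/\<beta>)*(da/z1 - (-da-db)/z0)) * da
   + (-(3/2)*(db - (-da-db)) + (1/\<beta>)*(db/z2 - (-da-db)/z0)) * db
   = -3*da^2 - 3*da*db - 3*db^2 + (1/\<beta>)*(da^2/z1 + db^2/z2 + (da+db)^2/z0)"
    by (simp add: field_simps power2_eq_square)
  show ?thesis
  unfolding P1_def P2_def
  apply (intro derivative_eq_intros lg_chain refl)
  apply (simp_all only: z1_def[symmetric] z2_def[symmetric])
  apply (simp_all only: z0_def[symmetric])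
  using pz nz assms(4) by (simp_all add: HQz field_simps power2_eq_square)
qed


lemma line_comp: "(y + t *\<^sub>R axis i 1) $ k = y$k + t * (axis i 1 $ k)"
  by simp

lemma axis_cases: "(axis i (1::real) $ (1::2) = 1 \<and> axis i (1::real) $ (2::2) = 0) \<or> (axis i (1::real) $ (1::2) = 0 \<and> axis i (1::real) $ (2::2) = 1)"
proof -
  have "i = 1 \<or> i = 2" by (rule exhaust_2)
  then show ?thesis by (auto simp: axis_def)
qed

lemma ax: "axis 1 (1::real) $ (2::2) = 0" "axis 2 (1::real) $ (1::2) = 0"
  "axis 1 (1::real) $ (1::2) = 1" "axis 2 (1::real) $ (2::2) = 1"
  by (simp_all add: axis_def)

lemma second_gen:
  fixes G :: "real^2 \<Rightarrow> real"
  assumes x: "0 < x$1" "0 < x$2" "x$1 + x$2 < 1"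
    and PP: "\<And>y. 0 < y$1 \<Longrightarrow> 0 < y$2 \<Longrightarrow> y$1 + y$2 < 1 \<Longrightarrow> G y = PP (y$1) (y$2)"
    and D: "((\<lambda>u. PP (x$1 + u*(axis i 1 $ 1)) (x$2 + u*(axis i 1 $ 2))) has_real_derivative D) (at 0)"
  shows "pderiv2 i G x = D"
proof -
  define m where "m = min (x$1) (min (x$2) (1 - x$1 - x$2))"
  have m: "0 < m" "m \<le> x$1" "m \<le> x$2" "m \<le> 1 - x$1 - x$2" using x by (auto simp: m_def)
  have eq: "PP (x$1 + t*(axis i 1 $ 1)) (x$2 + t*(axis i 1 $ 2)) = G (x + t *\<^sub>R axis i 1)"
    if t: "t \<in> ball 0 m" for t
  proof -
    have at: "\<bar>t\<bar> < m" using t by (simp add: dist_real_def)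
    have "0 < (x + t *\<^sub>R axis i 1)$1 \<and> 0 < (x + t *\<^sub>R axis i 1)$2 \<and> (x + t *\<^sub>R axis i 1)$1 + (x + t *\<^sub>R axis i 1)$2 < 1"
      using axis_cases[of i] at m unfolding line_comp by auto
    then show ?thesis using PP[of "x + t *\<^sub>R axis i 1"] unfolding line_comp by simp
  qed
  have "((\<lambda>t. G (x + t *\<^sub>R axis i 1)) has_real_derivative D) (at 0)"
    by (rule has_field_derivative_transform_within_open[OF D, where S="ball 0 m"]) (use m eq in auto)
  then show ?thesis unfolding pderiv2_def by (rule DERIV_imp_deriv)
qed

definition H11 where "H11 \<beta> a b = -3 + (1/\<beta>)*(1/a + 1/(1-a-b))"
definition H22 where "H22 \<beta> a b = -3 + (1/\<beta>)*(1/b + 1/(1-a-b))"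
definition H12 where "H12 \<beta> a b = -3/2 + (1/\<beta>)*(1/(1-a-b))"

lemma P1_line_deriv:
  assumes "0 < a + u*da" "0 < b + u*db" "0 < 1 - (a+u*da) - (b+u*db)" "\<beta> \<noteq> 0"
  shows "((\<lambda>u. P1 \<beta> r (a+u*da) (b+u*db)) has_real_derivative
     (-(3/2)*(2*da+db) + (1/\<beta>)*(da/(a+u*da) + (da+db)/(1 - (a+u*da) - (b+u*db))))) (at u)"
proof -
  define z1 where "z1 = a + u*da"
  define z2 where "z2 = b + u*db"
  define z0 where "z0 = 1 - z1 - z2"
  have pz: "0 < z1" "0 < z2" "0 < z0" using assms by (simp_all add: z1_def z2_def z0_def)
  have nz: "z1 \<noteq> 0" "z2 \<noteq> 0" "z0 \<noteq> 0" using pz by auto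
  show ?thesis
  unfolding P1_def
  apply (intro derivative_eq_intros refl)
  apply (simp_all only: z1_def[symmetric] z2_def[symmetric])
  apply (simp_all only: z0_def[symmetric])
  using pz nz assms(4) by (simp_all add: field_simps)
qed

lemma P2_line_deriv:
  assumes "0 < a + u*da" "0 < b + u*db" "0 < 1 - (a+u*da) - (b+u*db)" "\<beta> \<noteq> 0"
  shows "((\<lambda>u. P2 \<beta> r (a+u*da) (b+u*db)) has_real_derivative
     (-(3/2)*(da+2*db) + (1/\<beta>)*(db/(b+u*db) + (da+db)/(1 - (a+u*da) - (b+u*db))))) (at u)"
proof -
  define z1 where "z1 = a + u*da"
  define z2 where "z2 = b + u*db"
  define z0 where "z0 = 1 - z1 - z2"
  have pz: "0 < z1" "0 < z2" "0 < z0" using assms by (simp_all add: z1_def z2_def z0_def)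
  have nz: "z1 \<noteq> 0" "z2 \<noteq> 0" "z0 \<noteq> 0" using pz by auto
  show ?thesis
  unfolding P2_def
  apply (intro derivative_eq_intros refl)
  apply (simp_all only: z1_def[symmetric] z2_def[symmetric])
  apply (simp_all only: z0_def[symmetric])
  using pz nz assms(4) by (simp_all add: field_simps)
qed

lemma pd1: assumes "0 < y$1" "0 < y$2" "y$1 + y$2 < 1"
  shows "pderiv2 1 (\<lambda>x. Fb \<beta> x r) y = P1 \<beta> r (y$1) (y$2)"
  apply (rule second_gen[where PP="GG \<beta> r"])
  using assms apply simp_all
  apply (simp add: Fb_eq)
  using GG_line_deriv[of "y$1" 0 1 "y$2" 0 \<beta> r] assms by (simp add: ax)

lemma pd2: assumes "0 < y$1" "0 < y$2" "y$1 + y$2 < 1"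
  shows "pderiv2 2 (\<lambda>x. Fb \<beta> x r) y = P2 \<beta> r (y$1) (y$2)"
  apply (rule second_gen[where PP="GG \<beta> r"])
  using assms apply simp_all
  apply (simp add: Fb_eq)
  using GG_line_deriv[of "y$1" 0 0 "y$2" 1 \<beta> r] assms by (simp add: ax)


lemma hess_entries:
  assumes x: "0 < x$1" "0 < x$2" "x$1 + x$2 < 1" and b: "\<beta> \<noteq> 0"
  shows "pderiv2 1 (pderiv2 1 (\<lambda>x. Fb \<beta> x r)) x = H11 \<beta> (x$1) (x$2)"
    "pderiv2 1 (pderiv2 2 (\<lambda>x. Fb \<beta> x r)) x = H12 \<beta> (x$1) (x$2)"
    "pderiv2 2 (pderiv2 1 (\<lambda>x. Fb \<beta> x r)) x = H12 \<beta> (x$1) (x$2)"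
    "pderiv2 2 (pderiv2 2 (\<lambda>x. Fb \<beta> x r)) x = H22 \<beta> (x$1) (x$2)"
proof -
  show "pderiv2 1 (pderiv2 1 (\<lambda>x. Fb \<beta> x r)) x = H11 \<beta> (x$1) (x$2)"
    apply (rule second_gen[where PP="P1 \<beta> r"])
    using x apply simp_all
    apply (rule pd1; simp)
    using P1_line_deriv[of "x$1" 0 1 "x$2" 0 \<beta> r] x b by (simp add: ax H11_def)
  show "pderiv2 1 (pderiv2 2 (\<lambda>x. Fb \<beta> x r)) x = H12 \<beta> (x$1) (x$2)"
    apply (rule second_gen[where PP="P2 \<beta> r"])
    using x apply simp_all
    apply (rule pd2; simp)
    using P2_line_deriv[of "x$1" 0 1 "x$2" 0 \<beta> r] x b by (simp add: ax H12_def)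
  show "pderiv2 2 (pderiv2 1 (\<lambda>x. Fb \<beta> x r)) x = H12 \<beta> (x$1) (x$2)"
    apply (rule second_gen[where PP="P1 \<beta> r"])
    using x apply simp_all
    apply (rule pd1; simp)
    using P1_line_deriv[of "x$1" 0 0 "x$2" 1 \<beta> r] x b by (simp add: ax H12_def)
  show "pderiv2 2 (pderiv2 2 (\<lambda>x. Fb \<beta> x r)) x = H22 \<beta> (x$1) (x$2)"
    apply (rule second_gen[where PP="P2 \<beta> r"])
    using x apply simp_all
    apply (rule pd2; simp)
    using P2_line_deriv[of "x$1" 0 0 "x$2" 1 \<beta> r] x b by (simp add: ax H22_def)
qed


lemma entf_deriv: "0 < z \<Longrightarrow> (entf has_real_derivative (ln (3*z) + 1)) (at z)"
  unfolding entf_def by (auto intro!: derivative_eq_intros simp: field_simps)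

lemma entf_hd: "(g has_derivative g') (at x) \<Longrightarrow> 0 < g x \<Longrightarrow>
   ((\<lambda>x. entf (g x)) has_derivative (\<lambda>h. g' h * (ln (3 * g x) + 1))) (at x)"
  by (rule DERIV_compose_FDERIV[OF entf_deriv])

lemma hd_nth: "((\<lambda>y::real^2. y$i) has_derivative (\<lambda>h. h$i)) (at x)"
  by (rule bounded_linear_imp_has_derivative[OF bounded_linear_vec_nth])

lemma F_hd: assumes x: "0 < x$1" "0 < x$2" "x$1 + x$2 < 1"
  shows "((\<lambda>y. Fb \<beta> y r) has_derivative (\<lambda>h. P1 \<beta> r (x$1) (x$2) * h$1 + P2 \<beta> r (x$1) (x$2) * h$2)) (at x)"
proof -
  have fe: "(\<lambda>y. Fb \<beta> y r) = (\<lambda>y. GG \<beta> r (y$1) (y$2))" by (rule ext) (rule Fb_eq)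
  show ?thesis
    unfolding fe GG_def
    apply (rule has_derivative_eq_rhs)
    apply (rule derivative_intros hd_nth entf_hd | use x in linarith)+
    apply (rule ext)
    apply (simp add: P1_def P2_def algebra_simps add_divide_distrib diff_divide_distrib)
    done
qed

lemma pt_comp [simp]: "pt a b $ 1 = a" "pt a b $ 2 = b" by (simp_all add: pt_def)

lemma crit_sym: assumes "0 < t" "t < 1/2" "P1 \<beta> r t t = 0"
  shows "critical_point (\<lambda>x. Fb \<beta> x r) (pt t t)"
proof -
  have "P2 \<beta> r t t = P1 \<beta> r t t" by (simp add: P1_def P2_def)
  then show ?thesis unfolding critical_point_def
    using F_hd[of "pt t t" \<beta> r] assms by simp
qed

lemma hess_sym: assumes "0 < t" "t < 1/2" "\<beta> \<noteq> 0"
  shows "hessian (\<lambda>x. Fb \<beta> x r) (pt t t) $ 1 $ 1 = H11 \<beta> t t"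
    "hessian (\<lambda>x. Fb \<beta> x r) (pt t t) $ 1 $ 2 = H12 \<beta> t t"
    "hessian (\<lambda>x. Fb \<beta> x r) (pt t t) $ 2 $ 1 = H12 \<beta> t t"
    "hessian (\<lambda>x. Fb \<beta> x r) (pt t t) $ 2 $ 2 = H11 \<beta> t t"
  using hess_entries[of "pt t t" \<beta> r] assms by (simp_all add: hessian_def H11_def H22_def)

lemma eig_sym: assumes "0 < t" "t < 1/2" "\<beta> \<noteq> 0"
  shows "is_eigenvalue (hessian (\<lambda>x. Fb \<beta> x r) (pt t t)) (H11 \<beta> t t + H12 \<beta> t t)"
    "is_eigenvalue (hessian (\<lambda>x. Fb \<beta> x r) (pt t t)) (H11 \<beta> t t - H12 \<beta> t t)"
proof -
  note h = hess_sym[OF assms, of r]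
  show "is_eigenvalue (hessian (\<lambda>x. Fb \<beta> x r) (pt t t)) (H11 \<beta> t t + H12 \<beta> t t)"
    unfolding is_eigenvalue_def
  proof (intro exI conjI)
    show "pt 1 1 \<noteq> (0::real^2)" proof assume "pt 1 1 = (0::real^2)" then have "pt 1 1 $ 1 = (0::real^2) $ 1" by simp then show False by simp qed
    show "hessian (\<lambda>x. Fb \<beta> x r) (pt t t) *v pt 1 1 = (H11 \<beta> t t + H12 \<beta> t t) *\<^sub>R pt 1 1"
      unfolding vec_eq_iff forall_2 matrix_vector_mult_def using h by (simp add: sum_2)
  qed
  show "is_eigenvalue (hessian (\<lambda>x. Fb \<beta> x r) (pt t t)) (H11 \<beta> t t - H12 \<beta> t t)"
    unfolding is_eigenvalue_def
  proof (intro exI conjI)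
    show "pt 1 (-1) \<noteq> (0::real^2)" proof assume "pt 1 (-1) = (0::real^2)" then have "pt 1 (-1) $ 1 = (0::real^2) $ 1" by simp then show False by simp qed
    show "hessian (\<lambda>x. Fb \<beta> x r) (pt t t) *v pt 1 (-1) = (H11 \<beta> t t - H12 \<beta> t t) *\<^sub>R pt 1 (-1)"
      unfolding vec_eq_iff forall_2 matrix_vector_mult_def using h by (simp add: sum_2)
  qed
qed


lemma Ex_identity:
  fixes t da db \<beta> :: real
  assumes "\<beta> \<noteq> 0" "t \<noteq> 0" "1 - 2*t \<noteq> 0"
  shows "(1/\<beta>)*(da^2/t + db^2/t + (da+db)^2/(1-2*t)) =
     (3*da^2 + 3*da*db + 3*db^2) + (-9/2 + (1/\<beta>)*(1/t + 2/(1-2*t))) * (da+db)^2/2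
       + (-3/2 + (1/\<beta>)*(1/t)) * (da-db)^2/2"
  using assms by (simp add: field_simps power2_eq_square)

lemma Q_alt: "3*da^2 + 3*da*db + 3*db^2 = (9/4)*(da+db)^2 + (3/4)*(da-db::real)^2"
  by (simp add: power2_eq_square field_simps)

lemma scale_div: "k \<noteq> 0 \<Longrightarrow> t \<noteq> 0 \<Longrightarrow> s \<noteq> 0 \<Longrightarrow> \<beta> \<noteq> 0 \<Longrightarrow>
  (1/\<beta>)*(a/t + b/t + c/s)/k = (1/\<beta>)*(a/(k*t) + b/(k*t) + c/(k*(s::real)))"
  by (simp add: field_simps)

lemma quad_min:
  fixes da db :: real
  assumes b: "\<beta> > 0" and t: "0 < t" "0 < 1 - 2*t" and e: "0 < \<eta>" "\<eta> \<le> c"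
    and lp: "-9/2 + (1/\<beta>)*(1/t + 2/(1-2*t)) \<ge> 9*c/2"
    and lm: "-3/2 + (1/\<beta>)*(1/t) \<ge> 3*c/2"
    and z: "0 < z1" "0 < z2" "0 < 1 - z1 - z2" "z1 \<le> (1+\<eta>)*t" "z2 \<le> (1+\<eta>)*t" "1 - z1 - z2 \<le> (1+\<eta>)*(1-2*t)"
  shows "HQ \<beta> z1 z2 da db \<ge> 0"
proof -
  define Q where "Q = 3*da^2 + 3*da*db + 3*db^2"
  define Ex where "Ex = (1/\<beta>)*(da^2/t + db^2/t + (da+db)^2/(1-2*t))"
  define Ez where "Ez = (1/\<beta>)*(da^2/z1 + db^2/z2 + (da+db)^2/(1-z1-z2))"
  have Q0: "0 \<le> Q" unfolding Q_def Q_alt by simp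
  have t1: "da^2/((1+\<eta>)*t) \<le> da^2/z1" by (rule divide_left_mono) (use z t e in auto)
  have t2: "db^2/((1+\<eta>)*t) \<le> db^2/z2" by (rule divide_left_mono) (use z t e in auto)
  have t0: "(da+db)^2/((1+\<eta>)*(1-2*t)) \<le> (da+db)^2/(1-z1-z2)" by (rule divide_left_mono) (use z t e in auto)
  have "Ex/(1+\<eta>) = (1/\<beta>)*(da^2/((1+\<eta>)*t) + db^2/((1+\<eta>)*t) + (da+db)^2/((1+\<eta>)*(1-2*t)))"
    unfolding Ex_def by (rule scale_div) (use e t b in auto)
  also have "\<dots> \<le> Ez" unfolding Ez_def
    by (rule mult_left_mono) (use t0 t1 t2 b in auto)
  finally have Ezx: "Ex/(1+\<eta>) \<le> Ez" .
  have id: "Ex = Q + (-9/2 + (1/\<beta>)*(1/t + 2/(1-2*t))) * (da+db)^2/2 + (-3/2 + (1/\<beta>)*(1/t)) * (da-db)^2/2"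
    unfolding Ex_def Q_def by (rule Ex_identity) (use b t in auto)
  have p1: "(9*c/2) * (da+db)^2/2 \<le> (-9/2 + (1/\<beta>)*(1/t + 2/(1-2*t))) * (da+db)^2/2"
    using mult_right_mono[OF lp, of "(da+db)^2"] by simp
  have p2: "(3*c/2) * (da-db)^2/2 \<le> (-3/2 + (1/\<beta>)*(1/t)) * (da-db)^2/2"
    using mult_right_mono[OF lm, of "(da-db)^2"] by simp
  have "c * Q = (9*c/2) * (da+db)^2/2 + (3*c/2) * (da-db)^2/2"
    unfolding Q_def Q_alt by (simp add: algebra_simps)
  then have "Ex \<ge> Q + c*Q" using id p1 p2 by linarith
  moreover have "c*Q \<ge> \<eta>*Q" using e Q0 by (simp add: mult_right_mono)
  ultimately have "Ex \<ge> (1+\<eta>)*Q" by (simp add: algebra_simps)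
  then have "Q \<le> Ex/(1+\<eta>)" using e by (simp add: field_simps)
  then have "Q \<le> Ez" using Ezx by linarith
  moreover have "HQ \<beta> z1 z2 da db = Ez - Q" unfolding HQ_def Ez_def Q_def by simp
  ultimately show ?thesis by simp
qed

lemma quad_max:
  fixes da db :: real
  assumes b: "\<beta> > 0" and t: "0 < t" "0 < 1 - 2*t" and e: "0 < \<eta>" "\<eta> \<le> c" "\<eta> < 1"
    and lp: "-9/2 + (1/\<beta>)*(1/t + 2/(1-2*t)) \<le> -(9*c/2)"
    and lm: "-3/2 + (1/\<beta>)*(1/t) \<le> -(3*c/2)"
    and z: "(1-\<eta>)*t \<le> z1" "(1-\<eta>)*t \<le> z2" "(1-\<eta>)*(1-2*t) \<le> 1 - z1 - z2"
  shows "HQ \<beta> z1 z2 da db \<le> 0"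
proof -
  define Q where "Q = 3*da^2 + 3*da*db + 3*db^2"
  define Ex where "Ex = (1/\<beta>)*(da^2/t + db^2/t + (da+db)^2/(1-2*t))"
  define Ez where "Ez = (1/\<beta>)*(da^2/z1 + db^2/z2 + (da+db)^2/(1-z1-z2))"
  have Q0: "0 \<le> Q" unfolding Q_def Q_alt by simp
  have pe: "0 < 1 - \<eta>" using e by simp
  have pz: "0 < z1" "0 < z2" "0 < 1 - z1 - z2" using z pe t by (smt (verit) mult_pos_pos)+
  have t1: "da^2/z1 \<le> da^2/((1-\<eta>)*t)" by (rule divide_left_mono) (use z t pe pz in auto)
  have t2: "db^2/z2 \<le> db^2/((1-\<eta>)*t)" by (rule divide_left_mono) (use z t pe pz in auto)
  have t0: "(da+db)^2/(1-z1-z2) \<le> (da+db)^2/((1-\<eta>)*(1-2*t))" by (rule divide_left_mono) (use z t pe pz in auto)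
  have "Ez \<le> (1/\<beta>)*(da^2/((1-\<eta>)*t) + db^2/((1-\<eta>)*t) + (da+db)^2/((1-\<eta>)*(1-2*t)))"
    unfolding Ez_def by (rule mult_left_mono) (use t0 t1 t2 b in auto)
  also have "\<dots> = Ex/(1-\<eta>)"
    unfolding Ex_def by (rule scale_div[symmetric]) (use pe t b in auto)
  finally have Ezx: "Ez \<le> Ex/(1-\<eta>)" .
  have id: "Ex = Q + (-9/2 + (1/\<beta>)*(1/t + 2/(1-2*t))) * (da+db)^2/2 + (-3/2 + (1/\<beta>)*(1/t)) * (da-db)^2/2"
    unfolding Ex_def Q_def by (rule Ex_identity) (use b t in auto)
  have p1: "(-9/2 + (1/\<beta>)*(1/t + 2/(1-2*t))) * (da+db)^2/2 \<le> (-(9*c/2)) * (da+db)^2/2"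
    using mult_right_mono[OF lp, of "(da+db)^2"] by simp
  have p2: "(-3/2 + (1/\<beta>)*(1/t)) * (da-db)^2/2 \<le> (-(3*c/2)) * (da-db)^2/2"
    using mult_right_mono[OF lm, of "(da-db)^2"] by simp
  have "c * Q = (9*c/2) * (da+db)^2/2 + (3*c/2) * (da-db)^2/2"
    unfolding Q_def Q_alt by (simp add: algebra_simps)
  then have "Ex \<le> Q - c*Q" using id p1 p2 by linarith
  moreover have "c*Q \<ge> \<eta>*Q" using e Q0 by (simp add: mult_right_mono)
  ultimately have "Ex \<le> (1-\<eta>)*Q" by (simp add: algebra_simps)
  then have "Ex/(1-\<eta>) \<le> Q" using pe by (simp add: field_simps)
  then have "Ez \<le> Q" using Ezx by linarith
  moreover have "HQ \<beta> z1 z2 da db = Ez - Q" unfolding HQ_def Ez_def Q_def by simp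
  ultimately show ?thesis by simp
qed


lemma near_bounds:
  assumes t: "0 < t" "t < 1/2" and e: "0 < \<eta>" "\<eta> \<le> 1/2"
    and d: "dist y (pt t t) < \<eta> * min t (1-2*t) / 2" and u: "0 \<le> u" "u \<le> 1"
  shows "0 < t + u*(y$1-t) \<and> 0 < t + u*(y$2-t) \<and> 0 < 1 - (t+u*(y$1-t)) - (t+u*(y$2-t)) \<and>
    t + u*(y$1-t) \<le> (1+\<eta>)*t \<and> t + u*(y$2-t) \<le> (1+\<eta>)*t \<and> 1 - (t+u*(y$1-t)) - (t+u*(y$2-t)) \<le> (1+\<eta>)*(1-2*t) \<and>
    (1-\<eta>)*t \<le> t + u*(y$1-t) \<and> (1-\<eta>)*t \<le> t + u*(y$2-t) \<and> (1-\<eta>)*(1-2*t) \<le> 1 - (t+u*(y$1-t)) - (t+u*(y$2-t))"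
proof -
  define e where "e = \<eta> * min t (1-2*t) / 2"
  have n1: "\<bar>y$1 - t\<bar> < e"
    using component_le_norm_cart[of "y - pt t t" 1] d unfolding e_def dist_norm by simp
  have n2: "\<bar>y$2 - t\<bar> < e"
    using component_le_norm_cart[of "y - pt t t" 2] d unfolding e_def dist_norm by simp
  have a1: "\<bar>u*(y$1-t)\<bar> \<le> \<bar>y$1 - t\<bar>" using u by (simp add: abs_mult mult_left_le_one_le)
  have a2: "\<bar>u*(y$2-t)\<bar> \<le> \<bar>y$2 - t\<bar>" using u by (simp add: abs_mult mult_left_le_one_le)
  define pv where "pv = \<eta>*t"
  define pw where "pw = \<eta>*(1-2*t)"
  have f3: "2*e \<le> pv" unfolding e_def pv_def using e by (simp add: mult_left_mono)
  have f4: "2*e \<le> pw" unfolding e_def pw_def using e by (simp add: mult_left_mono)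
  have f5: "2*pv \<le> t" unfolding pv_def using e t mult_right_mono[of \<eta> "1/2" t] by simp
  have f6: "2*pw \<le> 1-2*t" unfolding pw_def using e t mult_right_mono[of \<eta> "1/2" "1-2*t"] by simp
  have f7: "0 \<le> pv" "0 \<le> pw" using e t by (simp_all add: pv_def pw_def)
  have r1: "(1+\<eta>)*t = t + pv" "(1-\<eta>)*t = t - pv" by (simp_all add: pv_def algebra_simps)
  have r2: "(1+\<eta>)*(1-2*t) = (1-2*t) + pw" "(1-\<eta>)*(1-2*t) = (1-2*t) - pw"
    by (simp_all add: pw_def algebra_simps)
  have b1: "\<bar>u*(y$1-t)\<bar> < e" using a1 n1 by linarith
  have b2: "\<bar>u*(y$2-t)\<bar> < e" using a2 n2 by linarith
  have c1: "-e < u*(y$1-t)" "u*(y$1-t) < e" using b1 by (simp_all add: abs_less_iff)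
  have c2: "-e < u*(y$2-t)" "u*(y$2-t) < e" using b2 by (simp_all add: abs_less_iff)
  have t2: "2*t < 1" using t by simp
  show ?thesis unfolding r1 r2 using c1 c2 f3 f4 f5 f6 f7 t(1) t2 by (intro conjI; linarith)
qed

lemma local_min_sym:
  assumes t: "0 < t" "t < 1/2" and b: "\<beta> > 0" and crit: "P1 \<beta> r t t = 0"
    and lp: "-9/2 + (1/\<beta>)*(1/t + 2/(1-2*t)) > 0" and lm: "-3/2 + (1/\<beta>)*(1/t) > 0"
  shows "local_min_on (\<lambda>x. Fb \<beta> x r) Xi (pt t t)"
proof -
  define A where "A = -9/2 + (1/\<beta>)*(1/t + 2/(1-2*t))"
  define B where "B = -3/2 + (1/\<beta>)*(1/t)"
  have AB: "0 < A" "0 < B" using lp lm by (simp_all add: A_def B_def)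
  define c where "c = min ((2/9)*A) ((2/3)*B)"
  have cc: "c \<le> (2/9)*A" "c \<le> (2/3)*B"
    unfolding c_def by (rule min.cobounded1, rule min.cobounded2)
  have c0: "0 < c" unfolding c_def using AB by simp
  have c2a: "(9/2)*c \<le> (9/2)*((2/9)*A)" using cc(1) by (intro mult_left_mono) auto
  have c2b: "(3/2)*c \<le> (3/2)*((2/3)*B)" using cc(2) by (intro mult_left_mono) auto
  have c: "0 < c" "A \<ge> 9*c/2" "B \<ge> 3*c/2"
    using c0 c2a c2b by simp_all
  define \<eta> where "\<eta> = min c (1/2)"
  have \<eta>: "0 < \<eta>" "\<eta> \<le> c" "\<eta> \<le> 1/2" using c by (auto simp: \<eta>_def)
  define e where "e = \<eta> * min t (1-2*t) / 2"
  have e: "0 < e" using \<eta> t by (simp add: e_def)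
  have P2: "P2 \<beta> r t t = P1 \<beta> r t t" by (simp add: P1_def P2_def)
  show ?thesis unfolding local_min_on_def
  proof (intro conjI exI[of _ e] ballI impI)
    show "pt t t \<in> Xi" using t by (simp add: Xi_def)
    show "0 < e" by (rule e)
    fix y assume y: "y \<in> Xi" "dist y (pt t t) < e"
    define da where "da = y$1 - t"
    define db where "db = y$2 - t"
    define \<phi> where "\<phi> = (\<lambda>u. GG \<beta> r (t + u*da) (t + u*db))"
    define \<psi> where "\<psi> = (\<lambda>u. P1 \<beta> r (t + u*da) (t + u*db) * da + P2 \<beta> r (t + u*da) (t + u*db) * db)"
    have nb: "\<And>u. 0 \<le> u \<Longrightarrow> u \<le> 1 \<Longrightarrow> 0 < t + u*da \<and> 0 < t + u*db \<and> 0 < 1 - (t+u*da) - (t+u*db) \<and>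
      t + u*da \<le> (1+\<eta>)*t \<and> t + u*db \<le> (1+\<eta>)*t \<and> 1 - (t+u*da) - (t+u*db) \<le> (1+\<eta>)*(1-2*t) \<and>
      (1-\<eta>)*t \<le> t + u*da \<and> (1-\<eta>)*t \<le> t + u*db \<and> (1-\<eta>)*(1-2*t) \<le> 1 - (t+u*da) - (t+u*db)"
      unfolding da_def db_def by (rule near_bounds) (use t \<eta> y in \<open>auto simp: e_def\<close>)
    have dpsi: "\<And>u. 0 \<le> u \<Longrightarrow> u \<le> 1 \<Longrightarrow> (\<psi> has_real_derivative HQ \<beta> (t+u*da) (t+u*db) da db) (at u)"
      unfolding \<psi>_def by (rule P_line_deriv) (use nb b in auto)
    have HQ0: "\<And>u. 0 \<le> u \<Longrightarrow> u \<le> 1 \<Longrightarrow> HQ \<beta> (t+u*da) (t+u*db) da db \<ge> 0"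
      by (rule quad_min[OF b _ _ \<eta>(1,2) c(2,3)[unfolded A_def B_def]]) (use nb t in auto)
    have psi0: "\<psi> 0 = 0" unfolding \<psi>_def using crit P2 by simp
    have psipos: "\<And>u::real. 0 \<le> u \<Longrightarrow> u \<le> 1 \<Longrightarrow> \<psi> u \<ge> 0"
    proof -
      fix u :: real assume u: "0 \<le> u" "u \<le> 1"
      have "\<psi> 0 \<le> \<psi> u"
        by (rule DERIV_nonneg_imp_nondecreasing[OF u(1)]) (use dpsi HQ0 u in force)
      then show "\<psi> u \<ge> 0" using psi0 by simp
    qed
    have dphi: "\<And>u. 0 \<le> u \<Longrightarrow> u \<le> 1 \<Longrightarrow> (\<phi> has_real_derivative \<psi> u) (at u)"
      unfolding \<phi>_def \<psi>_def by (rule GG_line_deriv) (use nb in auto)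
    have "\<phi> 0 \<le> \<phi> 1"
      by (rule DERIV_nonneg_imp_nondecreasing) (use dphi psipos in force)+
    moreover have "\<phi> 0 = Fb \<beta> (pt t t) r" by (simp add: \<phi>_def Fb_eq)
    moreover have "\<phi> 1 = Fb \<beta> y r" by (simp add: \<phi>_def Fb_eq da_def db_def)
    ultimately show "Fb \<beta> (pt t t) r \<le> Fb \<beta> y r" by simp
  qed
qed

lemma local_max_sym:
  assumes t: "0 < t" "t < 1/2" and b: "\<beta> > 0" and crit: "P1 \<beta> r t t = 0"
    and lp: "-9/2 + (1/\<beta>)*(1/t + 2/(1-2*t)) < 0" and lm: "-3/2 + (1/\<beta>)*(1/t) < 0"
  shows "local_max_on (\<lambda>x. Fb \<beta> x r) Xi (pt t t)"
proof -
  define A where "A = -9/2 + (1/\<beta>)*(1/t + 2/(1-2*t))"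
  define B where "B = -3/2 + (1/\<beta>)*(1/t)"
  have AB: "A < 0" "B < 0" using lp lm by (simp_all add: A_def B_def)
  define c where "c = min ((2/9)*(-A)) ((2/3)*(-B))"
  have cc: "c \<le> (2/9)*(-A)" "c \<le> (2/3)*(-B)"
    unfolding c_def by (rule min.cobounded1, rule min.cobounded2)
  have c0: "0 < c" unfolding c_def using AB by simp
  have c2a: "(9/2)*c \<le> (9/2)*((2/9)*(-A))" using cc(1) by (intro mult_left_mono) auto
  have c2b: "(3/2)*c \<le> (3/2)*((2/3)*(-B))" using cc(2) by (intro mult_left_mono) auto
  have c: "0 < c" "A \<le> -(9*c/2)" "B \<le> -(3*c/2)"
    using c0 c2a c2b by simp_all
  define \<eta> where "\<eta> = min c (1/2)"
  have \<eta>: "0 < \<eta>" "\<eta> \<le> c" "\<eta> \<le> 1/2" using c by (auto simp: \<eta>_def)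
  have \<eta>1: "\<eta> < 1" using \<eta> by simp
  define e where "e = \<eta> * min t (1-2*t) / 2"
  have e: "0 < e" using \<eta> t by (simp add: e_def)
  have P2: "P2 \<beta> r t t = P1 \<beta> r t t" by (simp add: P1_def P2_def)
  show ?thesis unfolding local_max_on_def
  proof (intro conjI exI[of _ e] ballI impI)
    show "pt t t \<in> Xi" using t by (simp add: Xi_def)
    show "0 < e" by (rule e)
    fix y assume y: "y \<in> Xi" "dist y (pt t t) < e"
    define da where "da = y$1 - t"
    define db where "db = y$2 - t"
    define \<phi> where "\<phi> = (\<lambda>u. GG \<beta> r (t + u*da) (t + u*db))"
    define \<psi> where "\<psi> = (\<lambda>u. P1 \<beta> r (t + u*da) (t + u*db) * da + P2 \<beta> r (t + u*da) (t + u*db) * db)"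
    have nb: "\<And>u. 0 \<le> u \<Longrightarrow> u \<le> 1 \<Longrightarrow> 0 < t + u*da \<and> 0 < t + u*db \<and> 0 < 1 - (t+u*da) - (t+u*db) \<and>
      t + u*da \<le> (1+\<eta>)*t \<and> t + u*db \<le> (1+\<eta>)*t \<and> 1 - (t+u*da) - (t+u*db) \<le> (1+\<eta>)*(1-2*t) \<and>
      (1-\<eta>)*t \<le> t + u*da \<and> (1-\<eta>)*t \<le> t + u*db \<and> (1-\<eta>)*(1-2*t) \<le> 1 - (t+u*da) - (t+u*db)"
      unfolding da_def db_def by (rule near_bounds) (use t \<eta> y in \<open>auto simp: e_def\<close>)
    have dpsi: "\<And>u. 0 \<le> u \<Longrightarrow> u \<le> 1 \<Longrightarrow> (\<psi> has_real_derivative HQ \<beta> (t+u*da) (t+u*db) da db) (at u)"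
      unfolding \<psi>_def by (rule P_line_deriv) (use nb b in auto)
    have HQ0: "\<And>u. 0 \<le> u \<Longrightarrow> u \<le> 1 \<Longrightarrow> HQ \<beta> (t+u*da) (t+u*db) da db \<le> 0"
      by (rule quad_max[OF b _ _ \<eta>(1,2) \<eta>1 c(2,3)[unfolded A_def B_def]]) (use nb t in auto)
    have psi0: "\<psi> 0 = 0" unfolding \<psi>_def using crit P2 by simp
    have psipos: "\<And>u::real. 0 \<le> u \<Longrightarrow> u \<le> 1 \<Longrightarrow> \<psi> u \<le> 0"
    proof -
      fix u :: real assume u: "0 \<le> u" "u \<le> 1"
      have "\<psi> 0 \<ge> \<psi> u"
        by (rule DERIV_nonpos_imp_nonincreasing[OF u(1)]) (use dpsi HQ0 u in force)
      then show "\<psi> u \<le> 0" using psi0 by simp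
    qed
    have dphi: "\<And>u. 0 \<le> u \<Longrightarrow> u \<le> 1 \<Longrightarrow> (\<phi> has_real_derivative \<psi> u) (at u)"
      unfolding \<phi>_def \<psi>_def by (rule GG_line_deriv) (use nb in auto)
    have "\<phi> 0 \<ge> \<phi> 1"
      by (rule DERIV_nonpos_imp_nonincreasing) (use dphi psipos in force)+
    moreover have "\<phi> 0 = Fb \<beta> (pt t t) r" by (simp add: \<phi>_def Fb_eq)
    moreover have "\<phi> 1 = Fb \<beta> y r" by (simp add: \<phi>_def Fb_eq da_def db_def)
    ultimately show "Fb \<beta> y r \<le> Fb \<beta> (pt t t) r" by simp
  qed
qed


lemma P1_zero: assumes "0 < t" "t < 1/2" "\<beta> \<noteq> 0" "1 - r - 3*t \<noteq> 0" "f_fun r t = \<beta>"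
  shows "P1 \<beta> r t t = 0"
proof -
  define D where "D = 1 - r - 3*t"
  have g: "gg t = (3/2)*\<beta>*D"
  proof -
    have "\<beta> = 2/(3*D) * gg t" using assms(5) by (simp add: f_gg D_def)
    moreover have "D \<noteq> 0" using assms(4) by (simp add: D_def)
    ultimately show ?thesis by (simp add: field_simps)
  qed
  have l1: "ln (3*t) = ln 3 + ln t" by (rule ln_mult_pos) (use assms in auto)
  have l2: "ln (3*(1-2*t)) = ln 3 + ln (1-2*t)" by (rule ln_mult_pos) (use assms in auto)
  have l: "ln (3*t) - ln (3*(1-2*t)) = - gg t"
    using l1 l2 gg_alt[OF assms(1,2)] by linarith
  have "P1 \<beta> r t t = -(3/2)*(3*t - 1 + r) + (1/\<beta>)*(ln (3*t) - ln (3*(1-2*t)))"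
    unfolding P1_def by (simp add: algebra_simps, simp add: field_simps)
  also have "\<dots> = -(3/2)*(3*t - 1 + r) - (1/\<beta>)*((3/2)*\<beta>*D)" unfolding l g by simp
  also have "\<dots> = 0" using assms(3) by (simp add: D_def field_simps)
  finally show ?thesis .
qed

lemma HA: fixes \<beta> t :: real assumes "0 < t" "t < 1/2"
  shows "H11 \<beta> t t + H12 \<beta> t t = -9/2 + (1/\<beta>)*(1/t + 2/(1-2*t))"
    "H11 \<beta> t t - H12 \<beta> t t = -3/2 + (1/\<beta>)*(1/t)"
  by (simp_all add: H11_def H12_def algebra_simps add_divide_distrib mult_2)

lemma A_formula: assumes "0 < t" "t < 1/2" "1 - r - 3*t \<noteq> 0" "gg t \<noteq> 0" "f_fun r t = \<beta>"
  shows "-9/2 + (1/\<beta>)*(1/t + 2/(1-2*t)) = 3*(h_fun t - r)/(2*gg t*(t*(1-2*t)))"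
proof -
  define D where "D = 1 - r - 3*t"
  define sv where "sv = 1 - 2*t"
  define g where "g = gg t"
  have nz: "t \<noteq> 0" "sv \<noteq> 0" "D \<noteq> 0" "g \<noteq> 0" using assms by (auto simp: D_def sv_def g_def)
  have e1: "1/t + 2/(1-2*t) = 1/(t* sv)" using nz unfolding sv_def by (simp add: field_simps)
  have eb: "\<beta> = 2/(3*D)*g" using assms(5) by (simp add: f_gg D_def g_def)
  have e2: "1/\<beta> = 3*D/(2*g)" unfolding eb using nz by (simp add: field_simps)
  have e3: "h_fun t - r = D - 3*t* sv*g" by (simp add: h_gg D_def sv_def g_def algebra_simps)
  have alg: "-9/2 + 3*D/(2*g) * (1/(t* sv)) = 3*(D - 3*t* sv*g)/(2*g*(t* sv))" using nz by (simp add: field_simps)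
  show ?thesis unfolding e1 e2 e3 alg by (simp add: sv_def g_def)
qed

lemma B_pos: fixes \<beta> t :: real assumes "0 < \<beta>" "0 < t" "\<beta>*t < 2/3" shows "-3/2 + (1/\<beta>)*(1/t) > 0"
proof -
  have "1/(\<beta>*t) > 3/2" using assms by (simp add: field_simps)
  then show ?thesis by simp
qed

lemma B_neg: fixes \<beta> t :: real assumes "0 < \<beta>" "0 < t" "\<beta>*t > 2/3" shows "-3/2 + (1/\<beta>)*(1/t) < 0"
proof -
  have "1/(\<beta>*t) < 3/2" using assms by (simp add: field_simps)
  then show ?thesis by simp
qed

lemma beta_t_small: assumes "0 < t" "t < 1/3" "1 - r - 3*t > 0" "h_fun t > r" "f_fun r t = \<beta>"
  shows "\<beta>*t < 2/3"
proof -
  define D where "D = 1 - r - 3*t"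
  have g: "gg t > 0" using gg_pos assms by simp
  have "D - 3*t*(1-2*t)*gg t = h_fun t - r" by (simp add: h_gg D_def algebra_simps)
  then have d1: "D > 3*t*(1-2*t)*gg t" using assms by simp
  have "t*gg t \<le> 3*t*(1-2*t)*gg t"
  proof -
    have "t \<le> 3*t*(1-2*t)" using assms by (simp add: algebra_simps)
    then show ?thesis using g by (simp add: mult_right_mono)
  qed
  then have "t * gg t < D" using d1 by linarith
  moreover have Dp: "D > 0" using assms by (simp add: D_def)
  moreover have "\<beta> = 2/(3*D) * gg t" using assms(5) by (simp add: f_gg D_def)
  ultimately have eqb: "\<beta>*(3*D) = 2*gg t" by (simp add: field_simps)
  have "(\<beta>*t*3)*D = 2*(t*gg t)" using eqb by (simp add: algebra_simps)
  also have "\<dots> < 2*D" using \<open>t * gg t < D\<close> by simp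
  finally have "(\<beta>*t*3)*D < 2*D" .
  then have "\<beta>*t*3 < 2" using Dp by (simp add: mult_less_cancel_right_pos)
  then show ?thesis by simp
qed


lemma ts_facts: assumes "\<beta> > 2"
  shows "0 < 2/(3*\<beta>)" "2/(3*\<beta>) < 1/3" "gg (2/(3*\<beta>)) = ln (3*\<beta>/2 - 2)"
    "r1 \<beta> = 1 - 3*(2/(3*\<beta>)) - (2/(3*\<beta>)) * gg (2/(3*\<beta>))" "gg (2/(3*\<beta>)) > 0"
proof -
  show a: "0 < 2/(3*\<beta>)" using assms by simp
  show b: "2/(3*\<beta>) < 1/3" using assms by (simp add: field_simps)
  have e: "(1 - 2*(2/(3*\<beta>)))/(2/(3*\<beta>)) = 3*\<beta>/2 - 2" using assms by (simp add: field_simps)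
  show g: "gg (2/(3*\<beta>)) = ln (3*\<beta>/2 - 2)" unfolding gg_def e by (rule refl)
  show "r1 \<beta> = 1 - 3*(2/(3*\<beta>)) - (2/(3*\<beta>)) * gg (2/(3*\<beta>))"
    unfolding g r1_def using assms by simp
  show "gg (2/(3*\<beta>)) > 0" using gg_pos a b by simp
qed

lemma ln_strict: assumes "y > (1::real)" shows "ln y < y - 1"
proof -
  define q where "q = sqrt y"
  have q: "q > 1" "y = q*q" using assms by (auto simp: q_def)
  have "ln y = 2 * ln q" using q by (simp add: ln_mult_pos)
  moreover have "ln q \<le> q - 1" using ln_le_minus_one q by simp
  moreover have "0 < (q - 1)*(q - 1)" using q by simp
  ultimately show ?thesis using q by (simp add: algebra_simps)
qed

lemma r1_pos: assumes "\<beta> > 2" shows "r1 \<beta> > 0"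
proof -
  define y where "y = 3*\<beta>/2 - 2"
  have y: "y > 1" using assms by (simp add: y_def)
  have l: "ln y < y - 1" by (rule ln_strict[OF y])
  have "(2/(3*\<beta>)) * ln y < (2/(3*\<beta>)) * (y - 1)" by (rule mult_strict_left_mono[OF l]) (use assms in simp)
  moreover have "(2/(3*\<beta>)) * (y - 1) = 1 - 2/\<beta>" using assms by (simp add: y_def field_simps)
  ultimately show ?thesis unfolding r1_def y_def by simp
qed

lemma r1_props: assumes "\<beta> > 2"
  shows "1 - r1 \<beta> - 3*(2/(3*\<beta>)) = (2/(3*\<beta>)) * gg (2/(3*\<beta>))"
    "1 - r1 \<beta> - 3*(2/(3*\<beta>)) > 0"
    "f_fun (r1 \<beta>) (2/(3*\<beta>)) = \<beta>"
    "h_fun (2/(3*\<beta>)) < r1 \<beta>"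
proof -
  note ts = ts_facts[OF assms]
  define a where "a = 2/(3*\<beta>)"
  define g where "g = gg a"
  have a: "0 < a" "a < 1/3" "g > 0" "r1 \<beta> = 1 - 3*a - a*g" using ts by (simp_all add: a_def g_def)
  show e: "1 - r1 \<beta> - 3*(2/(3*\<beta>)) = (2/(3*\<beta>)) * gg (2/(3*\<beta>))"
    using a unfolding a_def g_def by simp
  show "1 - r1 \<beta> - 3*(2/(3*\<beta>)) > 0" unfolding e by (rule mult_pos_pos) (use ts(1,5) in auto)
  have "f_fun (r1 \<beta>) a = 2/(3*(a*g)) * g" unfolding f_gg using a by (simp add: g_def)
  also have "\<dots> = 2/(3*a)" using a by (simp add: field_simps)
  also have "\<dots> = \<beta>" using assms by (simp add: a_def)
  finally show "f_fun (r1 \<beta>) (2/(3*\<beta>)) = \<beta>" by (simp add: a_def)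
  have "h_fun a - r1 \<beta> = a*g*(6*a - 2)" unfolding h_gg a(4) by (simp add: g_def algebra_simps)
  moreover have "a*g*(6*a - 2) < 0" using a by (simp add: mult_pos_neg)
  ultimately show "h_fun (2/(3*\<beta>)) < r1 \<beta>" by (simp add: a_def)
qed

lemma r1_lt_r2: assumes "\<beta> > 2" shows "r1 \<beta> < r2 \<beta>"
proof -
  define a where "a = 2/(3*\<beta>)"
  note rp = r1_props[OF assms, folded a_def]
  note ts = ts_facts[OF assms, folded a_def]
  have ag: "0 < a * gg a" by (rule mult_pos_pos) (use ts(1,5) in auto)
  have r1: "0 < r1 \<beta>" "r1 \<beta> < 1" using r1_pos[OF assms] ts(1,4) ag by linarith+
  have ak: "a < k_fun (r1 \<beta>)" using rp(2) by (simp add: k_fun_def)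
  have "a \<noteq> m0 (r1 \<beta>)" using rp(4) m0_props[OF r1] by auto
  then have "phi (r1 \<beta>) < f_fun (r1 \<beta>) a" using phi_le[OF r1 ts(1) ak] by simp
  then have p1: "phi (r1 \<beta>) < \<beta>" using rp(3) by simp
  note r2 = r2_props[OF assms]
  show ?thesis
  proof (rule ccontr)
    assume "\<not> r1 \<beta> < r2 \<beta>"
    then consider "r2 \<beta> = r1 \<beta>" | "r2 \<beta> < r1 \<beta>" by linarith
    then show False
    proof cases
      case 1 then show False using p1 r2 by simp
    next
      case 2 then show False using phi_mono[of "r2 \<beta>" "r1 \<beta>"] p1 r2 r1 by simp
    qed
  qed
qed

lemma bt_conv: assumes "(\<beta>::real) > 0"
  shows "2/(3*\<beta>) < u \<Longrightarrow> \<beta>*u > 2/3" "u < 2/(3*\<beta>) \<Longrightarrow> \<beta>*u < 2/3"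
  using assms by (simp_all add: field_simps)

theorem lemma5p4:
  fixes \<beta> :: real
  assumes "\<beta> > 2"
  shows "(\<forall>r. 0 < r \<and> r < r2 \<beta> \<longrightarrow> local_min_on (\<lambda>x. Fb \<beta> x r) Xi (m0_pt \<beta> r))
       \<and> (\<forall>r. 0 < r \<longrightarrow> saddle_point (\<lambda>x. Fb \<beta> x r) (sigma0_pt \<beta> r))
       \<and> (\<forall>r. 0 < r \<and> r < r1 \<beta> \<longrightarrow> local_max_on (\<lambda>x. Fb \<beta> x r) Xi (p_pt \<beta> r))
       \<and> (\<forall>r. r1 \<beta> < r \<and> r < r2 \<beta> \<longrightarrow> saddle_point (\<lambda>x. Fb \<beta> x r) (p_pt \<beta> r))"
proof (intro conjI allI impI)
  have b0: "\<beta> > 0" "\<beta> \<noteq> 0" using assms by auto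
  note r2 = r2_props[OF assms]
  fix r assume r: "0 < r \<and> r < r2 \<beta>"
  then have r': "0 < r" "r < 1" using r2 by auto
  have ph: "phi r < \<beta>" using lt_r2[OF assms] r by auto
  define p where "p = p_sol \<beta> r"
  note pp = p_props[OF b0(1) r' ph, folded p_def]
  note m = m0_props[OF r']
  have p: "0 < p" "p < 1/4" "p < 1/2" "p < 1/3" "1 - r - 3*p > 0" using pp m by (auto simp: k_fun_def)
  have P1: "P1 \<beta> r p p = 0" by (rule P1_zero) (use p pp b0 in auto)
  have hp: "h_fun p > r" using h_lt_m0[OF r'] pp by simp
  have gp: "gg p > 0" using gg_pos p by simp
  have A: "-9/2 + (1/\<beta>)*(1/p + 2/(1-2*p)) > 0"
  proof -
    have "0 < 3*(h_fun p - r)" using hp by simp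
    moreover have "0 < 2*gg p*(p*(1-2*p))" using gp p by simp
    ultimately have "3*(h_fun p - r)/(2*gg p*(p*(1-2*p))) > 0" by (rule divide_pos_pos)
    then show ?thesis using A_formula[of p r \<beta>] p pp gp by simp
  qed
  have B: "-3/2 + (1/\<beta>)*(1/p) > 0"
    by (rule B_pos[OF b0(1) p(1) beta_t_small]) (use p hp pp in auto)
  show "local_min_on (\<lambda>x. Fb \<beta> x r) Xi (m0_pt \<beta> r)"
    unfolding m0_pt_def p_def[symmetric] by (rule local_min_sym) (use p b0 P1 A B in auto)
next
  have b0: "\<beta> > 0" "\<beta> \<noteq> 0" using assms by auto
  fix r :: real assume r: "0 < r"
  define q where "q = q_sol \<beta> r"
  note qq = q_props[OF b0(1) r, folded q_def]
  have q: "0 < q" "q < 1/2" "1 - r - 3*q < 0" using qq r by auto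
  have P1: "P1 \<beta> r q q = 0" by (rule P1_zero) (use q qq b0 in auto)
  have hq: "h_fun q < 0" using h_neg2 qq by simp
  have gq: "gg q < 0" using gg_neg qq by simp
  have A: "-9/2 + (1/\<beta>)*(1/q + 2/(1-2*q)) > 0"
  proof -
    have "3*(h_fun q - r) < 0" using hq r by simp
    moreover have "2*gg q*(q*(1-2*q)) < 0" using gq q by (simp add: mult_neg_pos)
    ultimately have "3*(h_fun q - r)/(2*gg q*(q*(1-2*q))) > 0" by (rule divide_neg_neg)
    then show ?thesis using A_formula[of q r \<beta>] q qq gq by simp
  qed
  have bq: "\<beta>*q > 2/3"
  proof -
    have "2*(1/3) < \<beta>*q" by (rule mult_strict_mono) (use assms qq in auto)
    then show ?thesis by simp
  qed
  have B: "-3/2 + (1/\<beta>)*(1/q) < 0" by (rule B_neg[OF b0(1) q(1) bq])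
  show "saddle_point (\<lambda>x. Fb \<beta> x r) (sigma0_pt \<beta> r)"
    unfolding saddle_point_def sigma0_pt_def q_def[symmetric]
  proof (intro conjI exI)
    show "critical_point (\<lambda>x. Fb \<beta> x r) (pt q q)" by (rule crit_sym) (use q P1 in auto)
    show "H11 \<beta> q q + H12 \<beta> q q > 0" using A HA[of q \<beta>] q by simp
    show "H11 \<beta> q q - H12 \<beta> q q < 0" using B HA[of q \<beta>] q by simp
    show "is_eigenvalue (hessian (\<lambda>x. Fb \<beta> x r) (pt q q)) (H11 \<beta> q q + H12 \<beta> q q)"
      by (rule eig_sym) (use q b0 in auto)
    show "is_eigenvalue (hessian (\<lambda>x. Fb \<beta> x r) (pt q q)) (H11 \<beta> q q - H12 \<beta> q q)"
      by (rule eig_sym) (use q b0 in auto)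
  qed
next
  have b0: "\<beta> > 0" "\<beta> \<noteq> 0" using assms by auto
  note r2 = r2_props[OF assms]
  define a where "a = 2/(3*\<beta>)"
  note rp = r1_props[OF assms, folded a_def]
  note ts = ts_facts[OF assms, folded a_def]
  fix r assume r: "0 < r \<and> r < r1 \<beta>"
  have rr2: "r < r2 \<beta>" using r r1_lt_r2[OF assms] by simp
  then have r': "0 < r" "r < 1" using r2 r by auto
  have ph: "phi r < \<beta>" using lt_r2[OF assms] r rr2 by auto
  define u where "u = u_sol \<beta> r"
  note uu = u_props[OF b0(1) r' ph, folded u_def]
  note m = m0_props[OF r']
  have u: "0 < u" "u < 1/2" "u < 1/3" "1 - r - 3*u > 0" using uu m r' by (auto simp: k_fun_def)
  have P1: "P1 \<beta> r u u = 0" by (rule P1_zero) (use u uu b0 in auto)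
  have hu: "h_fun u < r" using h_gt_m0[OF r'] uu u by simp
  have gu: "gg u > 0" using gg_pos u by simp
  have A: "-9/2 + (1/\<beta>)*(1/u + 2/(1-2*u)) < 0"
  proof -
    have "3*(h_fun u - r) < 0" using hu by simp
    moreover have "0 < 2*gg u*(u*(1-2*u))" using gu u by simp
    ultimately have "3*(h_fun u - r)/(2*gg u*(u*(1-2*u))) < 0" by (rule divide_neg_pos)
    then show ?thesis using A_formula[of u r \<beta>] u uu gu by simp
  qed
  have au: "a < u"
  proof (rule ccontr)
    assume "\<not> a < u"
    then have ua: "u \<le> a" by simp
    have ak: "a < k_fun r" using rp(2) r by (simp add: k_fun_def)
    have fa: "f_fun r a < \<beta>" using f_mono_r[of a r "r1 \<beta>"] ts rp r by simp
    show False
    proof (cases "u = a")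
      case True then show False using fa uu by simp
    next
      case False
      then have "f_fun r u < f_fun r a" using f_inc[OF r', of u a] uu ua ak by simp
      then show False using fa uu by simp
    qed
  qed
  have B: "-3/2 + (1/\<beta>)*(1/u) < 0"
    by (rule B_neg[OF b0(1) u(1)]) (use bt_conv(1)[OF b0(1) au[unfolded a_def]] in simp)
  show "local_max_on (\<lambda>x. Fb \<beta> x r) Xi (p_pt \<beta> r)"
    unfolding p_pt_def u_def[symmetric] by (rule local_max_sym) (use u b0 P1 A B in auto)
next
  have b0: "\<beta> > 0" "\<beta> \<noteq> 0" using assms by auto
  note r2 = r2_props[OF assms]
  define a where "a = 2/(3*\<beta>)"
  note rp = r1_props[OF assms, folded a_def]
  note ts = ts_facts[OF assms, folded a_def]
  fix r assume r: "r1 \<beta> < r \<and> r < r2 \<beta>"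
  have r': "0 < r" "r < 1" using r2 r r1_pos[OF assms] by auto
  have ph: "phi r < \<beta>" using lt_r2[OF assms] r r' by auto
  define u where "u = u_sol \<beta> r"
  note uu = u_props[OF b0(1) r' ph, folded u_def]
  note m = m0_props[OF r']
  have u: "0 < u" "u < 1/2" "u < 1/3" "1 - r - 3*u > 0" using uu m r' by (auto simp: k_fun_def)
  have P1: "P1 \<beta> r u u = 0" by (rule P1_zero) (use u uu b0 in auto)
  have hu: "h_fun u < r" using h_gt_m0[OF r'] uu u by simp
  have gu: "gg u > 0" using gg_pos u by simp
  have A: "-9/2 + (1/\<beta>)*(1/u + 2/(1-2*u)) < 0"
  proof -
    have "3*(h_fun u - r) < 0" using hu by simp
    moreover have "0 < 2*gg u*(u*(1-2*u))" using gu u by simp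
    ultimately have "3*(h_fun u - r)/(2*gg u*(u*(1-2*u))) < 0" by (rule divide_neg_pos)
    then show ?thesis using A_formula[of u r \<beta>] u uu gu by simp
  qed
  have ua: "u < a"
  proof (rule ccontr)
    assume "\<not> u < a"
    then have au: "a \<le> u" by simp
    have ak: "a < k_fun r" using au uu by simp
    have am: "m0 r < a"
    proof (rule ccontr)
      assume "\<not> m0 r < a"
      then consider "a < m0 r" | "a = m0 r" by linarith
      then show False
      proof cases
        case 1 then show False using h_lt_m0[OF r' ts(1)] rp(4) r by simp
      next
        case 2 then show False using m rp(4) r by simp
      qed
    qed
    have D: "0 < 1 - r - 3*a" using ak by (simp add: k_fun_def)
    have fa: "f_fun r a > \<beta>" using f_mono_r[of a "r1 \<beta>" r] ts rp r D by simp
    show False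
    proof (cases "u = a")
      case True then show False using fa uu by simp
    next
      case False
      then have "f_fun r a < f_fun r u" using f_inc[OF r', of a u] uu au am by simp
      then show False using fa uu by simp
    qed
  qed
  have B: "-3/2 + (1/\<beta>)*(1/u) > 0"
    by (rule B_pos[OF b0(1) u(1)]) (use bt_conv(2)[OF b0(1) ua[unfolded a_def]] in simp)
  show "saddle_point (\<lambda>x. Fb \<beta> x r) (p_pt \<beta> r)"
    unfolding saddle_point_def p_pt_def u_def[symmetric]
  proof (intro conjI exI)
    show "critical_point (\<lambda>x. Fb \<beta> x r) (pt u u)" by (rule crit_sym) (use u P1 in auto)
    show "H11 \<beta> u u - H12 \<beta> u u > 0" using B HA[of u \<beta>] u by simp
    show "H11 \<beta> u u + H12 \<beta> u u < 0" using A HA[of u \<beta>] u by simp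
    show "is_eigenvalue (hessian (\<lambda>x. Fb \<beta> x r) (pt u u)) (H11 \<beta> u u - H12 \<beta> u u)"
      by (rule eig_sym) (use u b0 in auto)
    show "is_eigenvalue (hessian (\<lambda>x. Fb \<beta> x r) (pt u u)) (H11 \<beta> u u + H12 \<beta> u u)"
      by (rule eig_sym) (use u b0 in auto)
  qed
qed

end
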